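(* For any natural number $n$, $\{\omega^{n+1}, (\omega^{n+1})^\star\} \leq_c \{\omega^{\omega+n}, (\omega^{\omega+n})^\star\}$.
   Context: Structures have domains contained in $\omega$. For countable structures $\mathcal{A},\mathcal{B}$, the class $\{\mathcal{A},\mathcal{B}\}$ denotes the class of all structures (with domain $\subseteq\omega$) isomorphic to $\mathcal{A}$ or to $\mathcal{B}$. Linear orders are in the language $\{<\}$; $L^\star$ is the reverse of a linear order $L$; $\omega^{n+1}$, $\omega^{\omega+n}$ denote ordinal exponentiation (as order types). An enumeration operator $\Gamma$ is a c.e. set of pairs $(\alpha,\varphi)$ with $\alpha$ a finite set of basic (atomic or negated atomic) sentences of the input language with constants from $\omega$ and $\varphi$ a basic sentence of the output language with constants from $\omega$; $\Gamma(X)=\{\varphi : (\alpha,\varphi)\in\Gamma,\ \alpha\subseteq X\}$. $\Gamma$ is a computable embedding of $\mathcal{K}_0$ into $\mathcal{K}_1$ ($\mathcal{K}_0\leq_c\mathcal{K}_1$) if for every $\mathcal{A}\in\mathcal{K}_0$, $\Gamma$ applied to the atomic diagram of $\mathcal{A}$ is the atomic diagram of a structure $\Gamma(\mathcal{A})\in\mathcal{K}_1$, and for all $\mathcal{A},\mathcal{B}\in\mathcal{K}_0$, $\mathcal{A}\cong\mathcal{B}$ iff $\Gamma(\mathcal{A})\cong\Gamma(\mathcal{B})$. *)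

theory Defs
  imports Main "HOL-Library.Nat_Bijection"
begin

datatype recf = Zf | Sf | Proj nat | Comp recf "recf list" | Prec recf recf | Mu recf

inductive eval :: "recf \<Rightarrow> nat list \<Rightarrow> nat \<Rightarrow> bool" where
  ev_Z: "eval Zf xs 0"
| ev_S: "eval Sf (x # xs) (Suc x)"
| ev_Proj: "i < length xs \<Longrightarrow> eval (Proj i) xs (xs ! i)"
| ev_Comp: "length ys = length gs \<Longrightarrow> (\<forall>i<length gs. eval (gs ! i) xs (ys ! i))
     \<Longrightarrow> eval f ys z \<Longrightarrow> eval (Comp f gs) xs z"
| ev_Prec0: "eval f xs y \<Longrightarrow> eval (Prec f g) (0 # xs) y"
| ev_PrecS: "eval (Prec f g) (n # xs) y \<Longrightarrow> eval g (n # y # xs) z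
     \<Longrightarrow> eval (Prec f g) (Suc n # xs) z"
| ev_Mu: "eval f (y # xs) 0 \<Longrightarrow> (\<forall>k<y. \<exists>v. eval f (k # xs) v \<and> v \<noteq> 0)
     \<Longrightarrow> eval (Mu f) xs y"

definition ce :: "nat set \<Rightarrow> bool" where
  "ce W \<longleftrightarrow> (\<exists>f. \<forall>x. x \<in> W \<longleftrightarrow> (\<exists>y. eval f [x] y))"

datatype atom = AEq nat nat | ALess nat nat
datatype lit = Pos atom | Neg atom

fun enc_atom :: "atom \<Rightarrow> nat" where
  "enc_atom (AEq a b) = 2 * prod_encode (a, b)"
| "enc_atom (ALess a b) = 2 * prod_encode (a, b) + 1"

fun enc_lit :: "lit \<Rightarrow> nat" where
  "enc_lit (Pos a) = 2 * enc_atom a"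
| "enc_lit (Neg a) = 2 * enc_atom a + 1"

type_synonym 'a struc = "'a set \<times> 'a rel"

definition is_struc :: "'a struc \<Rightarrow> bool" where
  "is_struc A \<longleftrightarrow> snd A \<subseteq> fst A \<times> fst A"

definition iso :: "'a struc \<Rightarrow> 'b struc \<Rightarrow> bool" where
  "iso A B \<longleftrightarrow> (\<exists>f. bij_betw f (fst A) (fst B) \<and>
     (\<forall>x\<in>fst A. \<forall>y\<in>fst A. (x, y) \<in> snd A \<longleftrightarrow> (f x, f y) \<in> snd B))"

definition rev_order :: "'a struc \<Rightarrow> 'a struc" where
  "rev_order A = (fst A, (snd A)\<inverse>)"

definition diag :: "nat struc \<Rightarrow> lit set" where
  "diag A =
     {Pos (AEq a a) | a. a \<in> fst A}
   \<union> {Neg (AEq a b) | a b. a \<in> fst A \<and> b \<in> fst A \<and> a \<noteq> b}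
   \<union> {Pos (ALess a b) | a b. a \<in> fst A \<and> b \<in> fst A \<and> (a, b) \<in> snd A}
   \<union> {Neg (ALess a b) | a b. a \<in> fst A \<and> b \<in> fst A \<and> (a, b) \<notin> snd A}"

definition iso_class2 :: "'a struc \<Rightarrow> 'b struc \<Rightarrow> nat struc set" where
  "iso_class2 A B = {C. is_struc C \<and> (iso C A \<or> iso C B)}"

text \<open>An enumeration operator is a c.e. set of pairs (alpha, phi), alpha a finite set
  (given as a list) of basic sentences.\<close>
definition enc_pair :: "lit list \<times> lit \<Rightarrow> nat" where
  "enc_pair p = prod_encode (list_encode (map enc_lit (fst p)), enc_lit (snd p))"

definition enum_op :: "(lit list \<times> lit) set \<Rightarrow> bool" where
  "enum_op \<Gamma> \<longleftrightarrow> ce (enc_pair ` \<Gamma>)"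

definition apply_op :: "(lit list \<times> lit) set \<Rightarrow> lit set \<Rightarrow> lit set" where
  "apply_op \<Gamma> X = {\<phi>. \<exists>\<alpha>. (\<alpha>, \<phi>) \<in> \<Gamma> \<and> set \<alpha> \<subseteq> X}"

definition comp_embedding :: "(lit list \<times> lit) set \<Rightarrow> nat struc set \<Rightarrow> nat struc set \<Rightarrow> bool" where
  "comp_embedding \<Gamma> K0 K1 \<longleftrightarrow> enum_op \<Gamma> \<and>
     (\<forall>A\<in>K0. \<exists>B\<in>K1. apply_op \<Gamma> (diag A) = diag B) \<and>
     (\<forall>A\<in>K0. \<forall>A'\<in>K0. \<forall>B B'. is_struc B \<longrightarrow> is_struc B' \<longrightarrow>
        apply_op \<Gamma> (diag A) = diag B \<longrightarrow> apply_op \<Gamma> (diag A') = diag B' \<longrightarrow>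
        (iso A A' \<longleftrightarrow> iso B B'))"

definition comp_reducible :: "nat struc set \<Rightarrow> nat struc set \<Rightarrow> bool" (infix "\<le>\<^sub>c" 50) where
  "K0 \<le>\<^sub>c K1 \<longleftrightarrow> (\<exists>\<Gamma>. comp_embedding \<Gamma> K0 K1)"

text \<open>omega^beta for a well-order (I, lt): finitely supported functions I \<rightarrow> omega,
  compared at the largest argument where they differ (standard definition of ordinal
  exponentiation, as in HOL-Cardinals' oexp).\<close>
definition omega_pow :: "'i set \<Rightarrow> 'i rel \<Rightarrow> ('i \<Rightarrow> nat) struc" where
  "omega_pow I lt =
     (let D = {f. finite {i. f i \<noteq> 0} \<and> {i. f i \<noteq> 0} \<subseteq> I} in
      (D, {(f, g). f \<in> D \<and> g \<in> D \<and>
             (\<exists>i\<in>I. f i < g i \<and> (\<forall>j\<in>I. (i, j) \<in> lt \<longrightarrow> f j = g j))}))"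

definition omega_pow_nat :: "nat \<Rightarrow> (nat \<Rightarrow> nat) struc" where
  "omega_pow_nat k = omega_pow {..<k} {(i, j). i < j}"

text \<open>The ordinal omega + n, realised on nat + nat: all Inl's (order type omega)
  followed by Inr 0 < ... < Inr (n-1).\<close>
definition omega_plus_lt :: "(nat + nat) rel" where
  "omega_plus_lt = {(Inl a, Inl b) | a b. a < b} \<union> {(Inl a, Inr b) | a b. True}
                  \<union> {(Inr a, Inr b) | a b. a < b}"

definition omega_pow_omega_plus :: "nat \<Rightarrow> (nat + nat \<Rightarrow> nat) struc" where
  "omega_pow_omega_plus n = omega_pow (range Inl \<union> Inr ` {..<n}) omega_plus_lt"

end

theory Submission
  imports Defs
begin


definition opD :: "'i set \<Rightarrow> ('i \<Rightarrow> nat) set" where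
  "opD I = {f. finite {i. f i \<noteq> 0} \<and> {i. f i \<noteq> 0} \<subseteq> I}"

definition opR :: "'i set \<Rightarrow> 'i rel \<Rightarrow> ('i \<Rightarrow> nat) rel" where
  "opR I lt = {(f, g). f \<in> opD I \<and> g \<in> opD I \<and>
      (\<exists>i\<in>I. f i < g i \<and> (\<forall>j\<in>I. (i, j) \<in> lt \<longrightarrow> f j = g j))}"

lemma omega_pow_eq: "omega_pow I lt = (opD I, opR I lt)"
  by (simp add: omega_pow_def opD_def opR_def Let_def)

definition slin :: "'i set \<Rightarrow> 'i rel \<Rightarrow> bool" where
  "slin I lt \<longleftrightarrow> (\<forall>i\<in>I. (i, i) \<notin> lt) \<and>
     (\<forall>i\<in>I. \<forall>j\<in>I. \<forall>k\<in>I. (i, j) \<in> lt \<longrightarrow> (j, k) \<in> lt \<longrightarrow> (i, k) \<in> lt) \<and>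
     (\<forall>i\<in>I. \<forall>j\<in>I. i \<noteq> j \<longrightarrow> (i, j) \<in> lt \<or> (j, i) \<in> lt)"

lemma opR_irrefl: "(f, f) \<notin> opR I lt"
  by (auto simp: opR_def)

lemma opR_trans:
  assumes sl: "slin I lt" and fg: "(f, g) \<in> opR I lt" and gh: "(g, h) \<in> opR I lt"
  shows "(f, h) \<in> opR I lt"
proof -
  from fg obtain i where i: "i \<in> I" "f i < g i" "\<forall>j\<in>I. (i, j) \<in> lt \<longrightarrow> f j = g j"
    and D: "f \<in> opD I" "g \<in> opD I" by (auto simp: opR_def)
  from gh obtain j where j: "j \<in> I" "g j < h j" "\<forall>k\<in>I. (j, k) \<in> lt \<longrightarrow> g k = h k"
    and D2: "h \<in> opD I" by (auto simp: opR_def)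
  have tr: "\<And>a b c. a\<in>I \<Longrightarrow> b\<in>I \<Longrightarrow> c\<in>I \<Longrightarrow> (a, b) \<in> lt \<Longrightarrow> (b, c) \<in> lt \<Longrightarrow> (a, c) \<in> lt"
    using sl unfolding slin_def by blast
  have tot: "i = j \<or> (i, j) \<in> lt \<or> (j, i) \<in> lt" using sl i(1) j(1) unfolding slin_def by blast
  show ?thesis
  proof (rule disjE[OF tot])
    assume ij: "i = j"
    have "f j < h j" using i j ij by auto
    moreover have "\<forall>k\<in>I. (j, k) \<in> lt \<longrightarrow> f k = h k" using i j ij by auto
    ultimately show ?thesis using D D2 j(1) by (auto simp: opR_def)
  next
    assume "(i, j) \<in> lt \<or> (j, i) \<in> lt"
    then show ?thesis
    proof
      assume ij: "(i, j) \<in> lt"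
      have "\<forall>k\<in>I. (j, k) \<in> lt \<longrightarrow> f k = h k"
        using i j ij tr by metis
      moreover have "f j < h j" using i ij j by auto
      ultimately show ?thesis using D D2 j(1) by (auto simp: opR_def)
    next
      assume ji: "(j, i) \<in> lt"
      have "\<forall>k\<in>I. (i, k) \<in> lt \<longrightarrow> f k = h k"
        using i j ji tr by metis
      moreover have "f i < h i" using i ji j by auto
      ultimately show ?thesis using D D2 i(1) by (auto simp: opR_def)
    qed
  qed
qed

lemma finite_lt_max:
  assumes sl: "slin I lt" and fin: "finite S" and ne: "S \<noteq> {}" and sub: "S \<subseteq> I"
  shows "\<exists>m\<in>S. \<forall>j\<in>S. (m, j) \<notin> lt"
  using fin ne sub
proof (induction S rule: finite_ne_induct)
  case (singleton x)
  then show ?case using sl unfolding slin_def by auto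
next
  case (insert x F)
  then obtain m where m: "m \<in> F" "\<forall>j\<in>F. (m, j) \<notin> lt" by auto
  show ?case
  proof (cases "(m, x) \<in> lt")
    case True
    have "\<forall>j\<in>insert x F. (x, j) \<notin> lt"
    proof
      fix j assume "j \<in> insert x F"
      then show "(x, j) \<notin> lt"
      proof
        assume "j = x" then show ?thesis using sl insert.prems unfolding slin_def by auto
      next
        assume jF: "j \<in> F"
        show ?thesis
        proof
          assume "(x, j) \<in> lt"
          then have "(m, j) \<in> lt" using True sl insert.prems m(1) jF unfolding slin_def by blast
          then show False using m jF by auto
        qed
      qed
    qed
    then show ?thesis by auto
  next
    case False
    then show ?thesis using m by auto
  qed
qed

lemma opR_total:
  assumes sl: "slin I lt" and f: "f \<in> opD I" and g: "g \<in> opD I" and ne: "f \<noteq> g"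
  shows "(f, g) \<in> opR I lt \<or> (g, f) \<in> opR I lt"
proof -
  let ?S = "{i. f i \<noteq> g i}"
  have sub: "?S \<subseteq> {i. f i \<noteq> 0} \<union> {i. g i \<noteq> 0}" by auto
  have finS: "finite ?S" using f g sub by (auto simp: opD_def intro: finite_subset)
  have SI: "?S \<subseteq> I" using f g sub by (auto simp: opD_def)
  have neS: "?S \<noteq> {}" using ne by auto
  obtain m where m: "m \<in> ?S" "\<forall>j\<in>?S. (m, j) \<notin> lt"
    using finite_lt_max[OF sl finS neS SI] by blast
  have mI: "m \<in> I" using m SI by auto
  have above: "\<forall>j\<in>I. (m, j) \<in> lt \<longrightarrow> f j = g j" using m by auto
  show ?thesis
  proof (cases "f m < g m")
    case True then show ?thesis using above mI f g by (auto simp: opR_def)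
  next
    case False
    then have "g m < f m" using m by auto
    then show ?thesis using above mI f g by (auto simp: opR_def)
  qed
qed

lemma opR_bump:
  assumes sl: "slin I lt" and f: "f \<in> opD I" and i0: "i0 \<in> I"
  shows "(f, f(i0 := Suc (f i0))) \<in> opR I lt"
proof -
  have "{i. (f(i0 := Suc (f i0))) i \<noteq> 0} \<subseteq> insert i0 {i. f i \<noteq> 0}" by auto
  then have D: "f(i0 := Suc (f i0)) \<in> opD I" using f i0 by (auto simp: opD_def intro: finite_subset)
  have "\<forall>j\<in>I. (i0, j) \<in> lt \<longrightarrow> f j = (f(i0 := Suc (f i0))) j"
    using sl i0 unfolding slin_def by auto
  then show ?thesis using D f i0 by (auto simp: opR_def)
qed

lemma opD_zero: "(\<lambda>_. 0) \<in> opD I" by (simp add: opD_def)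

lemma opR_zero:
  assumes sl: "slin I lt" and f: "f \<in> opD I" and ne: "f \<noteq> (\<lambda>_. 0)"
  shows "((\<lambda>_. 0), f) \<in> opR I lt"
proof -
  have "(f, (\<lambda>_. 0)) \<notin> opR I lt" by (auto simp: opR_def)
  then show ?thesis using opR_total[OF sl opD_zero f] ne by auto
qed

lemma iso_refl: "iso A A"
  unfolding iso_def by (rule exI[of _ id]) auto

lemma iso_sym: assumes "iso A B" shows "iso B A"
proof -
  from assms obtain f where f: "bij_betw f (fst A) (fst B)"
    "\<forall>x\<in>fst A. \<forall>y\<in>fst A. (x, y) \<in> snd A \<longleftrightarrow> (f x, f y) \<in> snd B"
    unfolding iso_def by blast
  let ?g = "inv_into (fst A) f"
  have g: "bij_betw ?g (fst B) (fst A)" using f(1) by (rule bij_betw_inv_into)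
  have "\<forall>x\<in>fst B. \<forall>y\<in>fst B. (x, y) \<in> snd B \<longleftrightarrow> (?g x, ?g y) \<in> snd A"
  proof (intro ballI)
    fix x y assume x: "x \<in> fst B" and y: "y \<in> fst B"
    have gx: "?g x \<in> fst A" "f (?g x) = x" using x f(1)
      by (auto simp: bij_betw_def inv_into_into f_inv_into_f)
    have gy: "?g y \<in> fst A" "f (?g y) = y" using y f(1)
      by (auto simp: bij_betw_def inv_into_into f_inv_into_f)
    show "(x, y) \<in> snd B \<longleftrightarrow> (?g x, ?g y) \<in> snd A"
      using f(2) gx gy by metis
  qed
  then show ?thesis using g unfolding iso_def by blast
qed

lemma iso_trans: assumes "iso A B" "iso B C" shows "iso A C"
proof -
  from assms(1) obtain f where f: "bij_betw f (fst A) (fst B)"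
    "\<forall>x\<in>fst A. \<forall>y\<in>fst A. (x, y) \<in> snd A \<longleftrightarrow> (f x, f y) \<in> snd B"
    unfolding iso_def by blast
  from assms(2) obtain g where g: "bij_betw g (fst B) (fst C)"
    "\<forall>x\<in>fst B. \<forall>y\<in>fst B. (x, y) \<in> snd B \<longleftrightarrow> (g x, g y) \<in> snd C"
    unfolding iso_def by blast
  have "bij_betw (g \<circ> f) (fst A) (fst C)" using f(1) g(1) by (rule bij_betw_trans)
  moreover have "\<forall>x\<in>fst A. \<forall>y\<in>fst A. (x, y) \<in> snd A \<longleftrightarrow> ((g \<circ> f) x, (g \<circ> f) y) \<in> snd C"
  proof (intro ballI)
    fix x y assume x: "x \<in> fst A" and y: "y \<in> fst A"
    have "f x \<in> fst B" "f y \<in> fst B" using x y f(1) by (auto simp: bij_betw_def)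
    then show "(x, y) \<in> snd A \<longleftrightarrow> ((g \<circ> f) x, (g \<circ> f) y) \<in> snd C"
      using f(2) g(2) x y by simp
  qed
  ultimately show ?thesis unfolding iso_def by blast
qed

lemma iso_rev: assumes "iso A B" shows "iso (rev_order A) (rev_order B)"
  using assms unfolding iso_def rev_order_def by auto

lemma rev_rev: "rev_order (rev_order A) = A"
  by (simp add: rev_order_def)

lemma omega_pow_not_iso_rev:
  assumes sl: "slin I lt" and i0: "i0 \<in> I"
  shows "\<not> iso (omega_pow I lt) (rev_order (omega_pow I lt))"
proof
  assume "iso (omega_pow I lt) (rev_order (omega_pow I lt))"
  then obtain \<phi> where bij: "bij_betw \<phi> (opD I) (opD I)"
    and pr: "\<forall>x\<in>opD I. \<forall>y\<in>opD I. (x, y) \<in> opR I lt \<longleftrightarrow> (\<phi> y, \<phi> x) \<in> opR I lt"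
    unfolding iso_def omega_pow_eq rev_order_def by auto
  obtain a where a: "a \<in> opD I" "\<phi> a = (\<lambda>_. 0)"
    using bij opD_zero unfolding bij_betw_def by (metis imageE)
  let ?a' = "a(i0 := Suc (a i0))"
  have aa: "(a, ?a') \<in> opR I lt" by (rule opR_bump[OF sl a(1) i0])
  then have a'D: "?a' \<in> opD I" by (auto simp: opR_def)
  have r1: "(\<phi> ?a', (\<lambda>_. 0)) \<in> opR I lt" using pr a aa a'D by auto
  have "\<phi> ?a' \<noteq> (\<lambda>_. 0)"
  proof
    assume "\<phi> ?a' = (\<lambda>_. 0)"
    then have "\<phi> ?a' = \<phi> a" using a by simp
    then have "?a' = a" using bij a'D a(1) unfolding bij_betw_def inj_on_def by blast
    then show False using aa opR_irrefl by metis
  qed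
  moreover have "\<phi> ?a' \<in> opD I" using bij a'D unfolding bij_betw_def by auto
  ultimately have "((\<lambda>_. 0), \<phi> ?a') \<in> opR I lt" using opR_zero[OF sl] by blast
  then show False using r1 opR_trans[OF sl] opR_irrefl by metis
qed


lemma slin_nat: "slin I {(i, j). (i::nat) < j}"
  unfolding slin_def by auto

lemma slin_oplus: "slin I omega_plus_lt"
  unfolding slin_def omega_plus_lt_def
  by (auto) (metis sum.exhaust nat_neq_iff)+

lemma opR_nat_lex:
  assumes "(f, g) \<in> opR {..<k} {(i, j). (i::nat) < j}"
  shows "(map f (rev [0..<k]), map g (rev [0..<k])) \<in> lex less_than"
proof -
  from assms obtain i where i: "i < k" "f i < g i" "\<forall>j<k. i < j \<longrightarrow> f j = g j"
    by (auto simp: opR_def)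
  have up: "[0..<k] = [0..<i] @ i # [Suc i..<k]"
    using upt_add_eq_append[of 0 i "k-i"] upt_conv_Cons[of i k] i(1) by simp
  have eq: "map f (rev [Suc i..<k]) = map g (rev [Suc i..<k])"
    using i(3) by (auto simp: map_eq_conv)
  have L: "map f (rev [0..<k]) = map g (rev [Suc i..<k]) @ f i # map f (rev [0..<i])"
    using eq by (simp add: up)
  have L2: "map g (rev [0..<k]) = map g (rev [Suc i..<k]) @ g i # map g (rev [0..<i])"
    by (simp add: up)
  show ?thesis unfolding lex_conv
    apply (simp only: L L2 mem_Collect_eq prod.case)
    using i(2) by (auto simp: less_than_iff)
qed

lemma wf_opR_nat: "wf (opR {..<k} {(i, j). (i::nat) < j})"
proof -
  have "opR {..<k} {(i, j). (i::nat) < j} \<subseteq> inv_image (lex less_than) (\<lambda>f. map f (rev [0..<k]))"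
    using opR_nat_lex by auto
  then show ?thesis by (rule wf_subset[OF wf_inv_image[OF wf_lex[OF wf_less_than]]])
qed


definition slo :: "'a struc \<Rightarrow> bool" where
  "slo A \<longleftrightarrow> snd A \<subseteq> fst A \<times> fst A \<and> (\<forall>x. (x, x) \<notin> snd A) \<and> trans (snd A) \<and>
     (\<forall>x\<in>fst A. \<forall>y\<in>fst A. x \<noteq> y \<longrightarrow> (x, y) \<in> snd A \<or> (y, x) \<in> snd A)"

lemma slo_omega_pow: assumes "slin I lt" shows "slo (omega_pow I lt)"
proof -
  have "opR I lt \<subseteq> opD I \<times> opD I" by (auto simp: opR_def)
  moreover have "trans (opR I lt)" using opR_trans[OF assms] by (auto simp: trans_def)
  ultimately show ?thesis unfolding slo_def omega_pow_eq
    using opR_irrefl opR_total[OF assms] by auto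
qed

lemma slo_rev: "slo A \<Longrightarrow> slo (rev_order A)"
  unfolding slo_def rev_order_def by (auto simp: trans_def)

lemma iso_slo:
  assumes "iso A B" "slo B" "is_struc A"
  shows "slo A"
proof -
  from assms(1) obtain f where f: "bij_betw f (fst A) (fst B)"
    "\<forall>x\<in>fst A. \<forall>y\<in>fst A. (x, y) \<in> snd A \<longleftrightarrow> (f x, f y) \<in> snd B"
    unfolding iso_def by blast
  have sub: "snd A \<subseteq> fst A \<times> fst A" using assms(3) by (simp add: is_struc_def)
  have im: "\<And>x. x \<in> fst A \<Longrightarrow> f x \<in> fst B" using f(1) by (auto simp: bij_betw_def)
  have inj: "inj_on f (fst A)" using f(1) by (auto simp: bij_betw_def)
  have irr: "\<forall>x. (x, x) \<notin> snd A"
    using sub f(2) assms(2) unfolding slo_def by blast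
  have tr: "trans (snd A)"
  proof (rule transI)
    fix x y z assume xy: "(x, y) \<in> snd A" and yz: "(y, z) \<in> snd A"
    then have xyz: "x \<in> fst A" "y \<in> fst A" "z \<in> fst A" using sub by auto
    then have "(f x, f y) \<in> snd B" "(f y, f z) \<in> snd B" using f(2) xy yz by auto
    then have "(f x, f z) \<in> snd B" using assms(2) unfolding slo_def by (meson transD)
    then show "(x, z) \<in> snd A" using f(2) xyz by auto
  qed
  have tot: "\<forall>x\<in>fst A. \<forall>y\<in>fst A. x \<noteq> y \<longrightarrow> (x, y) \<in> snd A \<or> (y, x) \<in> snd A"
  proof (intro ballI impI)
    fix x y assume x: "x \<in> fst A" and y: "y \<in> fst A" and ne: "x \<noteq> y"
    then have "f x \<noteq> f y" using inj unfolding inj_on_def by auto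
    then have "(f x, f y) \<in> snd B \<or> (f y, f x) \<in> snd B"
      using assms(2) im x y unfolding slo_def by blast
    then show "(x, y) \<in> snd A \<or> (y, x) \<in> snd A" using f(2) x y by auto
  qed
  show ?thesis unfolding slo_def using sub irr tr tot by blast
qed

lemma iso_wf:
  assumes "iso A B" "wf (snd B)" "is_struc A"
  shows "wf (snd A)"
proof -
  from assms(1) obtain f where f: "bij_betw f (fst A) (fst B)"
    "\<forall>x\<in>fst A. \<forall>y\<in>fst A. (x, y) \<in> snd A \<longleftrightarrow> (f x, f y) \<in> snd B"
    unfolding iso_def by blast
  have sub: "snd A \<subseteq> fst A \<times> fst A" using assms(3) by (simp add: is_struc_def)
  have "snd A \<subseteq> inv_image (snd B) f" using sub f(2) by auto
  then show ?thesis using wf_subset[OF wf_inv_image[OF assms(2)]] by blast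
qed

definition Sq :: "nat set \<Rightarrow> nat list set" where
  "Sq V = {s. s \<noteq> [] \<and> length s = Suc (hd s) \<and> set s \<subseteq> V}"

definition lexR :: "nat rel \<Rightarrow> nat list \<Rightarrow> nat list \<Rightarrow> bool" where
  "lexR R s s' \<longleftrightarrow> (\<exists>i. i < length s \<and> i < length s' \<and> take i s = take i s' \<and> (s ! i, s' ! i) \<in> R)"

definition PhiL :: "nat struc \<Rightarrow> nat list struc" where
  "PhiL A = (Sq (fst A), {(s, s'). s \<in> Sq (fst A) \<and> s' \<in> Sq (fst A) \<and> lexR (snd A) s s'})"

lemma lexR_conv: "lexR (R\<inverse>) s s' \<longleftrightarrow> lexR R s' s"
  unfolding lexR_def by (auto simp: eq_commute)

lemma PhiL_rev: "PhiL (rev_order A) = rev_order (PhiL A)"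
  unfolding PhiL_def rev_order_def by (auto simp: lexR_conv)

lemma first_diff:
  assumes s: "s \<in> Sq V" and s': "s' \<in> Sq V" and ne: "s \<noteq> s'"
  shows "\<exists>i. i < length s \<and> i < length s' \<and> take i s = take i s' \<and> s ! i \<noteq> s' ! i"
proof (cases "hd s = hd s'")
  case False
  then show ?thesis using s s' by (intro exI[of _ 0]) (auto simp: Sq_def hd_conv_nth)
next
  case True
  then have len: "length s = length s'" using s s' by (simp add: Sq_def)
  have ex: "\<exists>j. j < length s \<and> s ! j \<noteq> s' ! j"
  proof (rule ccontr)
    assume "\<not> ?thesis"
    then have "s = s'" using len by (intro nth_equalityI) auto
    then show False using ne by simp
  qed
  define j where "j = (LEAST j. j < length s \<and> s ! j \<noteq> s' ! j)"
  have j1: "j < length s \<and> s ! j \<noteq> s' ! j" unfolding j_def using ex by (rule LeastI_ex)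
  have j2: "\<forall>k<j. s ! k = s' ! k"
  proof (intro allI impI)
    fix k assume "k < j"
    then have "\<not> (k < length s \<and> s ! k \<noteq> s' ! k)" unfolding j_def by (rule not_less_Least)
    then show "s ! k = s' ! k" using \<open>k < j\<close> j1 by auto
  qed
  have "take j s = take j s'"
    using j1 j2 len by (intro nth_equalityI) auto
  then show ?thesis using j1 len by auto
qed

lemma lexR_irrefl: "(\<forall>x. (x, x) \<notin> R) \<Longrightarrow> \<not> lexR R s s"
  unfolding lexR_def by auto

lemma lexR_trans:
  assumes tr: "trans R" and a: "lexR R s1 s2" and b: "lexR R s2 s3"
  shows "lexR R s1 s3"
proof -
  from a obtain i where i: "i < length s1" "i < length s2" "take i s1 = take i s2" "(s1 ! i, s2 ! i) \<in> R"
    unfolding lexR_def by blast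
  from b obtain j where j: "j < length s2" "j < length s3" "take j s2 = take j s3" "(s2 ! j, s3 ! j) \<in> R"
    unfolding lexR_def by blast
  consider "i < j" | "i = j" | "j < i" by arith
  then show ?thesis
  proof cases
    case 1
    have "take i s2 = take i s3" using j(3) 1 by (metis min.strict_order_iff take_take)
    moreover have "s2 ! i = s3 ! i" using j(3) 1 by (metis nth_take)
    ultimately show ?thesis unfolding lexR_def using i j 1
      by (intro exI[of _ i]) auto
  next
    case 2
    then show ?thesis unfolding lexR_def using i j tr by (intro exI[of _ i]) (auto dest: transD)
  next
    case 3
    have "take j s1 = take j s2" using i(3) 3 by (metis min.strict_order_iff take_take)
    moreover have "s1 ! j = s2 ! j" using i(3) 3 by (metis nth_take)
    ultimately show ?thesis unfolding lexR_def using i j 3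
      by (intro exI[of _ j]) auto
  qed
qed

lemma slo_PhiL:
  assumes "slo A"
  shows "slo (PhiL A)"
proof -
  have irr: "\<forall>x. (x, x) \<notin> snd A" and tr: "trans (snd A)"
    and tot: "\<forall>x\<in>fst A. \<forall>y\<in>fst A. x \<noteq> y \<longrightarrow> (x, y) \<in> snd A \<or> (y, x) \<in> snd A"
    using assms unfolding slo_def by auto
  have "trans (snd (PhiL A))"
    unfolding PhiL_def using lexR_trans[OF tr] by (auto simp: trans_def)
  moreover have "\<forall>x\<in>fst (PhiL A). \<forall>y\<in>fst (PhiL A). x \<noteq> y \<longrightarrow>
      (x, y) \<in> snd (PhiL A) \<or> (y, x) \<in> snd (PhiL A)"
  proof (intro ballI impI)
    fix s s' assume s: "s \<in> fst (PhiL A)" and s': "s' \<in> fst (PhiL A)" and ne: "s \<noteq> s'"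
    then have sS: "s \<in> Sq (fst A)" "s' \<in> Sq (fst A)" by (auto simp: PhiL_def)
    obtain i where i: "i < length s" "i < length s'" "take i s = take i s'" "s ! i \<noteq> s' ! i"
      using first_diff[OF sS ne] by blast
    have "s ! i \<in> fst A" "s' ! i \<in> fst A" using sS i by (auto simp: Sq_def)
    then have "(s ! i, s' ! i) \<in> snd A \<or> (s' ! i, s ! i) \<in> snd A" using tot i(4) by blast
    then show "(s, s') \<in> snd (PhiL A) \<or> (s', s) \<in> snd (PhiL A)"
      unfolding PhiL_def lexR_def using sS i by auto
  qed
  ultimately show ?thesis unfolding slo_def using lexR_irrefl[OF irr]
    by (auto simp: PhiL_def)
qed

lemma wf_PhiL:
  assumes "slo A" "wf (snd A)"
  shows "wf (snd (PhiL A))"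
proof -
  let ?R = "snd A"
  have "snd (PhiL A) \<subseteq> inv_image (?R <*lex*> lex ?R) (\<lambda>s. (hd s, tl s))"
  proof
    fix p assume p: "p \<in> snd (PhiL A)"
    obtain s s' where pe: "p = (s, s')" by (cases p)
    have sS: "s \<in> Sq (fst A)" "s' \<in> Sq (fst A)" and lx: "lexR ?R s s'"
      using p pe by (auto simp: PhiL_def)
    from lx obtain i where i: "i < length s" "i < length s'" "take i s = take i s'" "(s ! i, s' ! i) \<in> ?R"
      unfolding lexR_def by blast
    obtain a t where st: "s = a # t" using sS by (cases s) (auto simp: Sq_def)
    obtain a' t' where st': "s' = a' # t'" using sS by (cases s') (auto simp: Sq_def)
    show "p \<in> inv_image (?R <*lex*> lex ?R) (\<lambda>s. (hd s, tl s))"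
    proof (cases i)
      case 0
      then show ?thesis using i pe st st' by auto
    next
      case (Suc k)
      have aa: "a = a'" using i(3) Suc st st' by auto
      have lt: "length t = length t'" using sS st st' aa by (auto simp: Sq_def)
      have tk: "take k t = take k t'" using i(3) Suc st st' by auto
      have kk: "k < length t" "(t ! k, t' ! k) \<in> ?R" using i Suc st st' by auto
      have e1: "t = take k t @ t ! k # drop (Suc k) t" using kk(1) by (rule id_take_nth_drop)
      have e2: "t' = take k t @ t' ! k # drop (Suc k) t'"
        using id_take_nth_drop[of k t'] kk(1) lt tk by simp
      have "(t, t') \<in> lex ?R"
        unfolding lex_conv
        apply (simp only: mem_Collect_eq prod.case)
        apply (rule conjI[OF lt])
        apply (rule exI[of _ "take k t"], rule exI[of _ "t ! k"], rule exI[of _ "t' ! k"],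
               rule exI[of _ "drop (Suc k) t"], rule exI[of _ "drop (Suc k) t'"])
        using e1 e2 kk(2) by blast
      then show ?thesis using pe st st' aa by auto
    qed
  qed
  moreover have "wf (?R <*lex*> lex ?R)" using assms(2) by (intro wf_lex_prod wf_lex)
  ultimately show ?thesis by (meson wf_subset wf_inv_image)
qed


definition smono :: "'a struc \<Rightarrow> 'b struc \<Rightarrow> ('a \<Rightarrow> 'b) \<Rightarrow> bool" where
  "smono A B f \<longleftrightarrow> (\<forall>x\<in>fst A. f x \<in> fst B) \<and> (\<forall>x y. (x, y) \<in> snd A \<longrightarrow> (f x, f y) \<in> snd B)"

definition refl_of :: "'a struc \<Rightarrow> 'a rel" where
  "refl_of A = snd A \<union> Id_on (fst A)"

lemma slo_asym: "slo A \<Longrightarrow> (x, y) \<in> snd A \<Longrightarrow> (y, x) \<notin> snd A"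
  unfolding slo_def by (meson transD)

lemma Field_refl_of: "slo A \<Longrightarrow> Field (refl_of A) = fst A"
  unfolding refl_of_def slo_def Field_def by auto

lemma Well_order_refl_of:
  assumes "slo A" "wf (snd A)"
  shows "Well_order (refl_of A)"
proof -
  have sub: "snd A \<subseteq> fst A \<times> fst A" and irr: "\<forall>x. (x, x) \<notin> snd A" and tr: "trans (snd A)"
    and tot: "\<forall>x\<in>fst A. \<forall>y\<in>fst A. x \<noteq> y \<longrightarrow> (x, y) \<in> snd A \<or> (y, x) \<in> snd A"
    using assms(1) unfolding slo_def by auto
  let ?r = "refl_of A"
  have F: "Field ?r = fst A" using Field_refl_of[OF assms(1)] .
  have r1: "refl_on (fst A) ?r" unfolding refl_on_def refl_of_def using sub by auto
  have r2: "trans ?r" unfolding refl_of_def trans_def using tr sub by (auto dest: transD)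
  have r3: "antisym ?r" unfolding refl_of_def antisym_def using slo_asym[OF assms(1)] by blast
  have r4: "total_on (fst A) ?r" unfolding refl_of_def total_on_def using tot by blast
  have r5: "?r - Id = snd A" unfolding refl_of_def using irr by auto
  have r0: "?r \<subseteq> fst A \<times> fst A" unfolding refl_of_def using sub by auto
  have "well_order_on (fst A) ?r"
    unfolding well_order_on_def linear_order_on_def partial_order_on_def preorder_on_def
    using r0 r1 r2 r3 r4 r5 assms(2) by simp
  then show ?thesis using F by simp
qed

lemma smono_inj:
  assumes "slo A" "smono A B f" "slo B"
  shows "inj_on f (fst A)"
proof (rule inj_onI)
  fix x y assume x: "x \<in> fst A" and y: "y \<in> fst A" and e: "f x = f y"
  show "x = y"
  proof (rule ccontr)
    assume "x \<noteq> y"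
    then have "(x, y) \<in> snd A \<or> (y, x) \<in> snd A" using assms(1) x y unfolding slo_def by blast
    then have "(f x, f y) \<in> snd B \<or> (f y, f x) \<in> snd B" using assms(2) unfolding smono_def by blast
    then show False using e assms(3) unfolding slo_def by auto
  qed
qed

lemma smono_no_decr:
  assumes "slo A" "wf (snd A)" "smono A A f" "x \<in> fst A"
  shows "(f x, x) \<notin> snd A"
proof
  assume fx: "(f x, x) \<in> snd A"
  let ?M = "{x \<in> fst A. (f x, x) \<in> snd A}"
  have "x \<in> ?M" using fx assms(4) by auto
  from wfE_min[OF assms(2) this] obtain m where m: "m \<in> ?M" "\<And>y. (y, m) \<in> snd A \<Longrightarrow> y \<notin> ?M"
    by blast
  have "(f m, m) \<in> snd A" using m(1) by auto
  then have "f m \<notin> ?M" using m(2) by blast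
  moreover have "f m \<in> fst A" using m(1) assms(3) unfolding smono_def by auto
  moreover have "(f (f m), f m) \<in> snd A" using \<open>(f m, m) \<in> snd A\<close> assms(3) unfolding smono_def by auto
  ultimately show False by auto
qed

lemma smono_comp: "smono A B f \<Longrightarrow> smono B C g \<Longrightarrow> smono A C (g \<circ> f)"
  unfolding smono_def by auto

lemma not_ordLess_if_mutual:
  assumes A: "slo A" "wf (snd A)" and B: "slo B" "wf (snd B)"
    and g: "smono B A g"
  shows "\<not> (refl_of A, refl_of B) \<in> ordLess"
proof
  assume "(refl_of A, refl_of B) \<in> ordLess"
  then obtain e where e: "embedS (refl_of A) (refl_of B) e"
    unfolding ordLess_def by auto
  have WA: "Well_order (refl_of A)" using Well_order_refl_of[OF A] .
  have WB: "Well_order (refl_of B)" using Well_order_refl_of[OF B] .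
  have FA: "Field (refl_of A) = fst A" using Field_refl_of[OF A(1)] .
  have FB: "Field (refl_of B) = fst B" using Field_refl_of[OF B(1)] .
  have emb: "embed (refl_of A) (refl_of B) e" and nb: "\<not> bij_betw e (fst A) (fst B)"
    using e unfolding embedS_def FA FB by auto
  have cmp: "compat (refl_of A) (refl_of B) e" and inj: "inj_on e (fst A)"
    and ofl: "wo_rel.ofilter (refl_of B) (e ` fst A)"
    using emb embed_iff_compat_inj_on_ofilter[OF WA WB] FA by auto
  have sub: "e ` fst A \<subseteq> fst B" and dc: "\<forall>a\<in>e ` fst A. under (refl_of B) a \<subseteq> e ` fst A"
    using ofl FB unfolding wo_rel.ofilter_def[OF wo_rel.intro[OF WB]] by auto
  have "e ` fst A \<noteq> fst B" using nb inj unfolding bij_betw_def by auto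
  then obtain b where b: "b \<in> fst B" "b \<notin> e ` fst A" using sub by auto
  have below: "\<forall>a\<in>fst A. (e a, b) \<in> snd B"
  proof
    fix a assume a: "a \<in> fst A"
    have ea: "e a \<in> fst B" using sub a by auto
    have "e a \<noteq> b" using b a by auto
    moreover have "(b, e a) \<notin> snd B"
    proof
      assume "(b, e a) \<in> snd B"
      then have "b \<in> under (refl_of B) (e a)" unfolding under_def refl_of_def by auto
      then show False using dc a b by auto
    qed
    ultimately show "(e a, b) \<in> snd B" using B(1) ea b(1) unfolding slo_def by blast
  qed
  have me: "smono A B e"
    unfolding smono_def
  proof
    show "\<forall>x\<in>fst A. e x \<in> fst B" using sub by auto
    show "\<forall>x y. (x, y) \<in> snd A \<longrightarrow> (e x, e y) \<in> snd B"
    proof (intro allI impI)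
      fix x y assume xy: "(x, y) \<in> snd A"
      then have xyA: "x \<in> fst A" "y \<in> fst A" using A(1) unfolding slo_def by auto
      have "(e x, e y) \<in> refl_of B" using cmp xy unfolding compat_def refl_of_def by auto
      moreover have "e x \<noteq> e y" using inj xyA xy A(1) unfolding inj_on_def slo_def by auto
      ultimately show "(e x, e y) \<in> snd B" unfolding refl_of_def by auto
    qed
  qed
  have "smono B B (e \<circ> g)" using smono_comp[OF g me] .
  moreover have "g b \<in> fst A" using g b(1) unfolding smono_def by auto
  then have "((e \<circ> g) b, b) \<in> snd B" using below by auto
  ultimately show False using smono_no_decr[OF B _ b(1)] by blast
qed

lemma mutual_iso:
  assumes A: "slo A" "wf (snd A)" and B: "slo B" "wf (snd B)"
    and f: "smono A B f" and g: "smono B A g"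
  shows "iso A B"
proof -
  have WA: "Well_order (refl_of A)" using Well_order_refl_of[OF A] .
  have WB: "Well_order (refl_of B)" using Well_order_refl_of[OF B] .
  have n1: "(refl_of A, refl_of B) \<notin> ordLess" using not_ordLess_if_mutual[OF A B g] .
  have n2: "(refl_of B, refl_of A) \<notin> ordLess" using not_ordLess_if_mutual[OF B A f] .
  have "(refl_of B, refl_of A) \<in> ordLeq" using ordLess_or_ordLeq[OF WA WB] n1 by auto
  then have "(refl_of B, refl_of A) \<in> ordIso" using n2 ordLeq_iff_ordLess_or_ordIso by blast
  then obtain h where h: "BNF_Wellorder_Embedding.iso (refl_of B) (refl_of A) h"
    unfolding ordIso_def by auto
  have bij: "bij_betw h (fst B) (fst A)" using h Field_refl_of[OF A(1)] Field_refl_of[OF B(1)]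
    unfolding BNF_Wellorder_Embedding.iso_def by auto
  have cmp: "compat (refl_of B) (refl_of A) h"
    using h embed_iff_compat_inj_on_ofilter[OF WB WA] unfolding BNF_Wellorder_Embedding.iso_def by auto
  have inj: "inj_on h (fst B)" using bij unfolding bij_betw_def by auto
  have fw: "\<And>x y. (x, y) \<in> snd B \<Longrightarrow> (h x, h y) \<in> snd A"
  proof -
    fix x y assume xy: "(x, y) \<in> snd B"
    then have xyB: "x \<in> fst B" "y \<in> fst B" using B(1) unfolding slo_def by auto
    have "(h x, h y) \<in> refl_of A" using cmp xy unfolding compat_def refl_of_def by auto
    moreover have "h x \<noteq> h y" using inj xyB xy B(1) unfolding inj_on_def slo_def by auto
    ultimately show "(h x, h y) \<in> snd A" unfolding refl_of_def by auto
  qed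
  have "\<forall>x\<in>fst B. \<forall>y\<in>fst B. (x, y) \<in> snd B \<longleftrightarrow> (h x, h y) \<in> snd A"
  proof (intro ballI iffI)
    fix x y assume x: "x \<in> fst B" and y: "y \<in> fst B"
    show "(x, y) \<in> snd B \<Longrightarrow> (h x, h y) \<in> snd A" by (rule fw)
    assume hxy: "(h x, h y) \<in> snd A"
    show "(x, y) \<in> snd B"
    proof (rule ccontr)
      assume nxy: "(x, y) \<notin> snd B"
      have "x = y \<or> (y, x) \<in> snd B" using B(1) x y nxy unfolding slo_def by blast
      then show False
      proof
        assume "x = y" then show False using hxy A(1) unfolding slo_def by auto
      next
        assume "(y, x) \<in> snd B"
        then have "(h y, h x) \<in> snd A" by (rule fw)
        then show False using hxy slo_asym[OF A(1)] by blast
      qed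
    qed
  qed
  then have "iso B A" using bij unfolding iso_def by blast
  then show ?thesis by (rule iso_sym)
qed


abbreviation "IA n \<equiv> {..<Suc n}"
abbreviation "ltN \<equiv> {(i, j). (i::nat) < j}"
abbreviation "IT n \<equiv> range Inl \<union> Inr ` {..<n}"

lemma opR_intro:
  assumes "f \<in> opD I" "g \<in> opD I" "i \<in> I" "f i < g i" "\<forall>j\<in>I. (i, j) \<in> lt \<longrightarrow> f j = g j"
  shows "(f, g) \<in> opR I lt"
  using assms unfolding opR_def by blast

lemma oplt_simps[simp]:
  "(Inr a, Inr b) \<in> omega_plus_lt \<longleftrightarrow> a < b"
  "(Inl a, Inl b) \<in> omega_plus_lt \<longleftrightarrow> a < b"
  "(Inl a, Inr b) \<in> omega_plus_lt"
  "(Inr a, Inl b) \<notin> omega_plus_lt"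
  by (auto simp: omega_plus_lt_def)

lemma inj_nat_big:
  assumes "inj (f :: nat \<Rightarrow> nat)"
  shows "\<exists>p. d \<le> f p"
proof (rule ccontr)
  assume "\<not> ?thesis"
  then have "f ` {..d} \<subseteq> {..<d}" by (auto simp: not_le)
  then have "card (f ` {..d}) \<le> card {..<d}" by (intro card_mono) auto
  moreover have "card (f ` {..d}) = Suc d" using assms by (simp add: card_image inj_on_subset)
  ultimately show False by simp
qed

locale emb =
  fixes n :: nat and A :: "nat struc" and h :: "(nat \<Rightarrow> nat) \<Rightarrow> nat"
  assumes hbij: "bij_betw h (opD (IA n)) (fst A)"
    and hord: "\<forall>x\<in>opD (IA n). \<forall>y\<in>opD (IA n). (x, y) \<in> opR (IA n) ltN \<longleftrightarrow> (h x, h y) \<in> snd A"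
    and sA: "slo A" and wA: "wf (snd A)"
begin

lemma h_in: "x \<in> opD (IA n) \<Longrightarrow> h x \<in> fst A"
  using hbij by (auto simp: bij_betw_def)

lemma h_inj: "x \<in> opD (IA n) \<Longrightarrow> y \<in> opD (IA n) \<Longrightarrow> h x = h y \<Longrightarrow> x = y"
  using hbij by (auto simp: bij_betw_def inj_on_def)

lemma h_mono: "(x, y) \<in> opR (IA n) ltN \<Longrightarrow> (h x, h y) \<in> snd A"
  using hord by (auto simp: opR_def)

definition vx :: "(nat + nat \<Rightarrow> nat) \<Rightarrow> nat \<Rightarrow> (nat \<Rightarrow> nat)" where
  "vx g p = (\<lambda>i. if i = 0 then p else if i \<le> n then g (Inr (i - 1)) else 0)"

definition ee :: "nat \<Rightarrow> (nat \<Rightarrow> nat)" where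
  "ee c = (\<lambda>i. if i = 0 then c else 0)"

definition dg :: "(nat + nat \<Rightarrow> nat) \<Rightarrow> nat" where
  "dg g = (LEAST d. \<forall>j\<ge>d. g (Inl j) = 0)"

definition pp :: "(nat + nat \<Rightarrow> nat) \<Rightarrow> nat" where
  "pp g = (LEAST p. dg g \<le> h (vx g p))"

definition F2 :: "(nat + nat \<Rightarrow> nat) \<Rightarrow> nat list" where
  "F2 g = h (vx g (pp g)) # map (\<lambda>j. h (ee (g (Inl j)))) (rev [0..<h (vx g (pp g))])"

lemma vx_D: "vx g p \<in> opD (IA n)"
proof -
  have "{i. vx g p i \<noteq> 0} \<subseteq> {..n}" by (auto simp: vx_def split: if_splits)
  then show ?thesis unfolding opD_def by (auto intro: finite_subset)
qed

lemma ee_D: "ee c \<in> opD (IA n)"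
proof -
  have "{i. ee c i \<noteq> 0} \<subseteq> {0}" by (auto simp: ee_def split: if_splits)
  then show ?thesis unfolding opD_def by (auto intro: finite_subset)
qed

lemma vx_inj: "inj (\<lambda>p. h (vx g p))"
proof (rule injI)
  fix p q assume "h (vx g p) = h (vx g q)"
  then have "vx g p = vx g q" using h_inj vx_D by blast
  then have "vx g p 0 = vx g q 0" by simp
  then show "p = q" by (simp add: vx_def)
qed

lemma dg_ex:
  assumes "g \<in> opD (IT n)"
  shows "\<forall>j\<ge>dg g. g (Inl j) = 0"
proof -
  have f0: "finite {i. g i \<noteq> 0}" using assms by (simp add: opD_def)
  have "{j. g (Inl j) \<noteq> 0} = Inl -` {i. g i \<noteq> 0}" by auto
  moreover have "finite (Inl -` {i. g i \<noteq> 0})" using finite_vimageI[OF f0, of Inl] by (simp add: inj_def)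
  ultimately have fin: "finite {j. g (Inl j) \<noteq> 0}" by simp
  obtain B where B: "\<forall>j\<in>{j. g (Inl j) \<noteq> 0}. j < B" using fin finite_nat_set_iff_bounded by blast
  have "\<forall>j\<ge>B. g (Inl j) = 0"
  proof (intro allI impI)
    fix j assume "B \<le> j"
    then show "g (Inl j) = 0" using B by force
  qed
  then show ?thesis unfolding dg_def by (rule LeastI)
qed

lemma dg_le: "\<forall>j\<ge>d. g (Inl j) = 0 \<Longrightarrow> dg g \<le> d"
  unfolding dg_def by (rule Least_le)

lemma pp_prop: "dg g \<le> h (vx g (pp g))"
proof -
  obtain p where "dg g \<le> h (vx g p)" using inj_nat_big[OF vx_inj] by blast
  then show ?thesis unfolding pp_def by (rule LeastI)
qed

lemma pp_le: "dg g \<le> h (vx g p) \<Longrightarrow> pp g \<le> p"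
  unfolding pp_def by (rule Least_le)

lemma F2_Sq: "F2 g \<in> Sq (fst A)"
  unfolding F2_def Sq_def using h_in vx_D ee_D by auto

lemma ee_lt: assumes "c < c'" shows "(ee c, ee c') \<in> opR (IA n) ltN"
proof -
  have "\<forall>j\<in>IA n. (0, j) \<in> ltN \<longrightarrow> ee c j = ee c' j" by (simp add: ee_def)
  moreover have "ee c 0 < ee c' 0" using assms by (simp add: ee_def)
  moreover have "(0::nat) \<in> IA n" by simp
  ultimately show ?thesis unfolding opR_def using ee_D by blast
qed

lemma vx_lt: assumes "p < q" shows "(vx g p, vx g q) \<in> opR (IA n) ltN"
proof -
  have "\<forall>j\<in>IA n. (0, j) \<in> ltN \<longrightarrow> vx g p j = vx g q j" by (simp add: vx_def)
  moreover have "vx g p 0 < vx g q 0" using assms by (simp add: vx_def)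
  moreover have "(0::nat) \<in> IA n" by simp
  ultimately show ?thesis unfolding opR_def using vx_D by blast
qed

lemma F2_mono:
  assumes gg: "(g, g') \<in> opR (IT n) omega_plus_lt"
  shows "(F2 g, F2 g') \<in> snd (PhiL A)"
proof -
  from gg have gD: "g \<in> opD (IT n)" "g' \<in> opD (IT n)" by (auto simp: opR_def)
  from gg obtain i0 where i0: "i0 \<in> IT n" "g i0 < g' i0"
    "\<forall>j\<in>IT n. (i0, j) \<in> omega_plus_lt \<longrightarrow> g j = g' j" by (auto simp: opR_def)
  have hd0: "lexR (snd A) (F2 g) (F2 g')" if "(h (vx g (pp g)), h (vx g' (pp g'))) \<in> snd A"
    unfolding lexR_def using that by (intro exI[of _ 0]) (auto simp: F2_def)
  show ?thesis
  proof (cases i0)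
    case (Inr r0)
    have r0: "r0 < n" using i0(1) Inr by auto
    have up: "\<forall>j\<in>IA n. (Suc r0, j) \<in> ltN \<longrightarrow> vx g (pp g) j = vx g' (pp g') j"
    proof (intro ballI impI)
      fix j assume j: "j \<in> IA n" "(Suc r0, j) \<in> ltN"
      then have jn: "j - 1 < n" "r0 < j - 1" by auto
      have m1: "Inr (j - 1) \<in> IT n" using jn(1) by blast
      have m2: "(i0, Inr (j - 1)) \<in> omega_plus_lt" using jn(2) Inr by simp
      have "g (Inr (j - 1)) = g' (Inr (j - 1))" using mp[OF bspec[OF i0(3) m1] m2] .
      then show "vx g (pp g) j = vx g' (pp g') j" using j by (simp add: vx_def)
    qed
    have lt: "vx g (pp g) (Suc r0) < vx g' (pp g') (Suc r0)" using i0(2) Inr r0 by (simp add: vx_def)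
    have "Suc r0 \<in> IA n" using r0 by simp
    then have "(vx g (pp g), vx g' (pp g')) \<in> opR (IA n) ltN"
      unfolding opR_def using up lt vx_D by blast
    then have "lexR (snd A) (F2 g) (F2 g')" by (rule hd0[OF h_mono])
    then show ?thesis using F2_Sq by (simp add: PhiL_def)
  next
    case (Inl j0)
    have inr: "\<And>r. r < n \<Longrightarrow> g (Inr r) = g' (Inr r)"
      using i0(3) Inl by auto
    have vxe: "vx g = vx g'" by (auto simp: vx_def inr fun_eq_iff)
    have inl: "\<And>j. j0 < j \<Longrightarrow> g (Inl j) = g' (Inl j)"
      using i0(3) Inl by auto
    have z': "\<forall>j\<ge>dg g'. g' (Inl j) = 0" using dg_ex[OF gD(2)] .
    have j0lt: "j0 < dg g'"
    proof (rule ccontr)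
      assume "\<not> j0 < dg g'"
      then have "g' (Inl j0) = 0" using z' by auto
      then show False using i0(2) Inl by simp
    qed
    have "\<forall>j\<ge>dg g'. g (Inl j) = 0"
    proof (intro allI impI)
      fix j assume "dg g' \<le> j"
      then have "j0 < j" using j0lt by simp
      then show "g (Inl j) = 0" using inl z' \<open>dg g' \<le> j\<close> by simp
    qed
    then have dgle: "dg g \<le> dg g'" by (rule dg_le)
    have ppg: "pp g \<le> pp g'"
      using dgle pp_prop[of g'] vxe by (intro pp_le) simp
    show ?thesis
    proof (cases "pp g < pp g'")
      case True
      then have "(vx g (pp g), vx g' (pp g')) \<in> opR (IA n) ltN" using vx_lt vxe by metis
      then have "lexR (snd A) (F2 g) (F2 g')" by (rule hd0[OF h_mono])
    then show ?thesis using F2_Sq by (simp add: PhiL_def)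
    next
      case False
      then have pe: "pp g = pp g'" using ppg by simp
      define x where "x = vx g (pp g)"
      have xe: "vx g' (pp g') = x" using pe vxe x_def by simp
      define m where "m = h x"
      have j0m: "j0 < m" using j0lt pp_prop[of g'] xe m_def by simp
      have s1: "F2 g = m # map (\<lambda>j. h (ee (g (Inl j)))) (rev [0..<m])"
        by (simp add: F2_def x_def m_def)
      have s2: "F2 g' = m # map (\<lambda>j. h (ee (g' (Inl j)))) (rev [0..<m])"
        using xe by (simp add: F2_def m_def)
      let ?i = "Suc (m - Suc j0)"
      have revn: "\<And>k. k < m \<Longrightarrow> rev [0..<m] ! k = m - Suc k"
        by (simp add: rev_nth)
      have "lexR (snd A) (F2 g) (F2 g')"
        unfolding lexR_def
      proof (intro exI[of _ ?i] conjI)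
        show "?i < length (F2 g)" "?i < length (F2 g')" using j0m s1 s2 by auto
        show "take ?i (F2 g) = take ?i (F2 g')"
        proof (rule nth_equalityI)
          show "length (take ?i (F2 g)) = length (take ?i (F2 g'))" using s1 s2 by simp
          fix k assume k: "k < length (take ?i (F2 g))"
          then have k': "k < ?i" using s1 j0m by simp
          show "take ?i (F2 g) ! k = take ?i (F2 g') ! k"
          proof (cases k)
            case 0 then show ?thesis using s1 s2 by simp
          next
            case (Suc kk)
            then have kk: "kk < m - Suc j0" using k' by simp
            then have "j0 < m - Suc kk" by simp
            then have "g (Inl (m - Suc kk)) = g' (Inl (m - Suc kk))" using inl by simp
            then show ?thesis using Suc kk k' s1 s2 revn by simp
          qed
        qed
        have "F2 g ! ?i = h (ee (g (Inl j0)))" using s1 j0m revn by simp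
        moreover have "F2 g' ! ?i = h (ee (g' (Inl j0)))" using s2 j0m revn by simp
        moreover have "(ee (g (Inl j0)), ee (g' (Inl j0))) \<in> opR (IA n) ltN"
          using i0(2) Inl by (intro ee_lt) simp
        ultimately show "(F2 g ! ?i, F2 g' ! ?i) \<in> snd A" using h_mono by simp
      qed
      then show ?thesis using F2_Sq by (auto simp: PhiL_def)
    qed
  qed
qed


definition hi :: "nat \<Rightarrow> (nat \<Rightarrow> nat)" where
  "hi = inv_into (opD (IA n)) h"

lemma hi_D: "a \<in> fst A \<Longrightarrow> hi a \<in> opD (IA n)"
  unfolding hi_def using hbij by (auto simp: bij_betw_def inv_into_into)

lemma h_hi: "a \<in> fst A \<Longrightarrow> h (hi a) = a"
  unfolding hi_def using hbij by (auto simp: bij_betw_def f_inv_into_f)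

lemma hi_mono: "(a, b) \<in> snd A \<Longrightarrow> (hi a, hi b) \<in> opR (IA n) ltN"
proof -
  assume ab: "(a, b) \<in> snd A"
  then have "a \<in> fst A" "b \<in> fst A" using sA unfolding slo_def by auto
  then show ?thesis using hord hi_D h_hi ab by metis
qed

lemma opD_zero_out: "x \<in> opD (IA n) \<Longrightarrow> n < i \<Longrightarrow> x i = 0"
  unfolding opD_def by auto

lemma opD_upd: "x \<in> opD (IA n) \<Longrightarrow> x(0 := p) \<in> opD (IA n)"
proof -
  assume x: "x \<in> opD (IA n)"
  have "{i. (x(0 := p)) i \<noteq> 0} \<subseteq> insert 0 {i. x i \<noteq> 0}" by auto
  then show ?thesis using x unfolding opD_def by (auto intro: finite_subset)
qed

definition E :: "(nat \<Rightarrow> nat) \<Rightarrow> nat" where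
  "E x = (\<Sum>p\<le>x 0. Suc (Suc n * h (x(0 := p))))"

lemma E_gt: "x \<in> opD (IA n) \<Longrightarrow> Suc n * h x < E x"
proof -
  assume x: "x \<in> opD (IA n)"
  have "Suc (Suc n * h (x(0 := x 0))) \<le> E x"
    unfolding E_def by (rule member_le_sum) auto
  then show ?thesis by simp
qed

lemma sum_atMost_strict:
  assumes "a < b" shows "(\<Sum>p\<le>a. Suc (f p)) < (\<Sum>p\<le>b. Suc ((f :: nat \<Rightarrow> nat) p))"
  using assms
proof (induction b)
  case 0 then show ?case by simp
next
  case (Suc b)
  then show ?case by (cases "a = b") (auto simp: less_Suc_eq)
qed

lemma E_strict:
  assumes "x 0 < x' 0" "\<forall>i. i \<noteq> 0 \<longrightarrow> x i = x' i"
  shows "E x < E x'"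
proof -
  have "\<And>p. x(0 := p) = x'(0 := p)" using assms(2) by (auto simp: fun_eq_iff)
  then show ?thesis unfolding E_def using sum_atMost_strict[OF assms(1)] by simp
qed

definition F1 :: "nat list \<Rightarrow> (nat + nat \<Rightarrow> nat)" where
  "F1 s = (\<lambda>i. case i of
      Inr r \<Rightarrow> (if r < n then hi (hd s) (Suc r) else 0)
    | Inl j \<Rightarrow> (if j = E (hi (hd s)) then 1
               else if j < Suc n * length (tl s)
                 then hi (tl s ! (length (tl s) - Suc (j div Suc n))) (j mod Suc n) else 0))"

lemma F1_D:
  assumes s: "s \<in> Sq (fst A)"
  shows "F1 s \<in> opD (IT n)"
proof -
  let ?B = "Suc (E (hi (hd s)) + Suc n * length (tl s))"
  have sub: "{i. F1 s i \<noteq> 0} \<subseteq> Inl ` {..<?B} \<union> Inr ` {..<n}"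
  proof
    fix i assume "i \<in> {i. F1 s i \<noteq> 0}"
    then show "i \<in> Inl ` {..<?B} \<union> Inr ` {..<n}"
      by (cases i) (auto simp: F1_def split: if_splits)
  qed
  have fin: "finite (Inl ` {..<?B} \<union> Inr ` {..<n})" by simp
  have sub2: "Inl ` {..<?B} \<union> Inr ` {..<n} \<subseteq> IT n" by auto
  have "finite {i. F1 s i \<noteq> 0}" by (rule finite_subset[OF sub fin])
  moreover have "{i. F1 s i \<noteq> 0} \<subseteq> IT n" by (rule order_trans[OF sub sub2])
  ultimately show ?thesis unfolding opD_def by simp
qed

lemma divmod_aux:
  assumes r: "r0 < Suc n"
  shows "(K * Suc n + r0) div Suc n = K" "(K * Suc n + r0) mod Suc n = r0"
proof -
  have "(r0 + K * Suc n) div Suc n = K + r0 div Suc n" by (rule div_mult_self1) simp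
  then show "(K * Suc n + r0) div Suc n = K" using r by (simp add: add.commute)
  have "(r0 + K * Suc n) mod Suc n = r0 mod Suc n" by (rule mod_mult_self1)
  then show "(K * Suc n + r0) mod Suc n = r0" using r by (simp add: add.commute)
qed

lemma divmod_above:
  assumes r: "r0 < Suc n" and lt: "K * Suc n + r0 < j"
  shows "K \<le> j div Suc n" "j div Suc n = K \<Longrightarrow> r0 < j mod Suc n"
proof -
  have dm: "j div Suc n * Suc n + j mod Suc n = j" by (rule div_mult_mod_eq)
  have "(K * Suc n + r0) div Suc n \<le> j div Suc n" using lt by (intro div_le_mono) simp
  then show "K \<le> j div Suc n" using divmod_aux[OF r] by simp
  show "j div Suc n = K \<Longrightarrow> r0 < j mod Suc n"
  proof -
    assume "j div Suc n = K"
    then have "K * Suc n + j mod Suc n = j" using dm by simp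
    then show "r0 < j mod Suc n" using lt by linarith
  qed
qed

lemma div_lt_k: "j < Suc n * k \<Longrightarrow> j div Suc n < k"
  by (simp add: less_mult_imp_div_less mult.commute)

lemma F1_mono:
  assumes ss: "(s, s') \<in> snd (PhiL A)"
  shows "(F1 s, F1 s') \<in> opR (IT n) omega_plus_lt"
proof -
  have sS: "s \<in> Sq (fst A)" "s' \<in> Sq (fst A)" and lx: "lexR (snd A) s s'"
    using ss by (auto simp: PhiL_def)
  obtain i where i: "i < length s" "i < length s'" "take i s = take i s'" "(s ! i, s' ! i) \<in> snd A"
    using lx unfolding lexR_def by blast
  obtain a ts where st: "s = a # ts" using sS by (cases s) (auto simp: Sq_def)
  obtain a' ts' where st': "s' = a' # ts'" using sS by (cases s') (auto simp: Sq_def)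
  have aA: "a \<in> fst A" "a' \<in> fst A" using sS st st' by (auto simp: Sq_def)
  have lk: "length ts = a" "length ts' = a'" using sS st st' by (auto simp: Sq_def)
  have tsA: "set ts \<subseteq> fst A" "set ts' \<subseteq> fst A" using sS st st' by (auto simp: Sq_def)
  define x where "x = hi a"
  define x' where "x' = hi a'"
  have xD: "x \<in> opD (IA n)" "x' \<in> opD (IA n)" using hi_D aA x_def x'_def by auto
  have hx: "h x = a" "h x' = a'" using h_hi aA x_def x'_def by auto
  have F1s: "F1 s = (\<lambda>i. case i of Inr r \<Rightarrow> (if r < n then x (Suc r) else 0)
    | Inl j \<Rightarrow> (if j = E x then 1 else if j < Suc n * a
                 then hi (ts ! (a - Suc (j div Suc n))) (j mod Suc n) else 0))"
    by (rule ext) (simp add: F1_def st x_def lk split: sum.split)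
  have F1s': "F1 s' = (\<lambda>i. case i of Inr r \<Rightarrow> (if r < n then x' (Suc r) else 0)
    | Inl j \<Rightarrow> (if j = E x' then 1 else if j < Suc n * a'
                 then hi (ts' ! (a' - Suc (j div Suc n))) (j mod Suc n) else 0))"
    by (rule ext) (simp add: F1_def st' x'_def lk split: sum.split)
  have Ex: "Suc n * a < E x" "Suc n * a' < E x'" using E_gt xD hx by auto
  have D: "F1 s \<in> opD (IT n)" "F1 s' \<in> opD (IT n)" using F1_D sS by auto
  show ?thesis
  proof (cases i)
    case 0
    have "(a, a') \<in> snd A" using i 0 st st' by simp
    then have "(x, x') \<in> opR (IA n) ltN" using hi_mono x_def x'_def by simp
    then obtain r0 where r0: "r0 \<in> IA n" "x r0 < x' r0" "\<forall>j\<in>IA n. (r0, j) \<in> ltN \<longrightarrow> x j = x' j"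
      unfolding opR_def by blast
    have abv: "\<And>j. r0 < j \<Longrightarrow> x j = x' j"
    proof -
      fix j assume "r0 < j"
      show "x j = x' j"
      proof (cases "j \<le> n")
        case True then show ?thesis using r0(3) \<open>r0 < j\<close> by auto
      next
        case False
        then have "n < j" by simp
        then show ?thesis using opD_zero_out[OF xD(1)] opD_zero_out[OF xD(2)] by simp
      qed
    qed
    show ?thesis
    proof (cases r0)
      case (Suc r)
      have rn: "r < n" using r0(1) Suc by simp
      have lt: "F1 s (Inr r) < F1 s' (Inr r)" using r0(2) Suc rn F1s F1s' by simp
      have up: "\<forall>j\<in>IT n. (Inr r, j) \<in> omega_plus_lt \<longrightarrow> F1 s j = F1 s' j"
      proof (intro ballI impI)
        fix j assume j: "j \<in> IT n" "(Inr r, j) \<in> omega_plus_lt"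
        show "F1 s j = F1 s' j"
        proof (cases j)
          case (Inl jj) then show ?thesis using j(2) by simp
        next
          case (Inr r')
          then have "r < r'" using j(2) by simp
          then have "x (Suc r') = x' (Suc r')" using abv Suc by simp
          then show ?thesis using Inr F1s F1s' by simp
        qed
      qed
      have "Inr r \<in> IT n" using rn by blast
      then show ?thesis by (rule opR_intro[OF D(1) D(2) _ lt up])
    next
      case 0
      have x0: "x 0 < x' 0" using r0(2) 0 by simp
      have oth: "\<forall>i. i \<noteq> 0 \<longrightarrow> x i = x' i" using abv 0 by simp
      have EE: "E x < E x'" using E_strict[OF x0 oth] .
      have lt: "F1 s (Inl (E x')) < F1 s' (Inl (E x'))" using EE Ex F1s F1s' by simp
      have up: "\<forall>j\<in>IT n. (Inl (E x'), j) \<in> omega_plus_lt \<longrightarrow> F1 s j = F1 s' j"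
      proof (intro ballI impI)
        fix j assume j: "j \<in> IT n" "(Inl (E x'), j) \<in> omega_plus_lt"
        show "F1 s j = F1 s' j"
        proof (cases j)
          case (Inl jj)
          then have "E x' < jj" using j(2) by simp
          then show ?thesis using Inl EE Ex F1s F1s' by simp
        next
          case (Inr r')
          then have "x (Suc r') = x' (Suc r')" using oth by simp
          then show ?thesis using Inr F1s F1s' by simp
        qed
      qed
      have "Inl (E x') \<in> IT n" by blast
      then show ?thesis by (rule opR_intro[OF D(1) D(2) _ lt up])
    qed
  next
    case (Suc q)
    have aa: "a = a'" using i(3) Suc st st' by simp
    have xx: "x' = x" using aa x_def x'_def by simp
    have tq: "take q ts = take q ts'" using i(3) Suc st st' by simp
    have qk: "q < a" using i(1) Suc st lk by simp
    have rq: "(ts ! q, ts' ! q) \<in> snd A" using i(4) Suc st st' by simp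
    define y where "y = hi (ts ! q)"
    define y' where "y' = hi (ts' ! q)"
    have "(y, y') \<in> opR (IA n) ltN" using hi_mono rq y_def y'_def by simp
    then obtain r0 where r0: "r0 \<in> IA n" "y r0 < y' r0" "\<forall>j\<in>IA n. (r0, j) \<in> ltN \<longrightarrow> y j = y' j"
      unfolding opR_def by blast
    have r0n: "r0 < Suc n" using r0(1) by simp
    define j0 where "j0 = (a - Suc q) * Suc n + r0"
    have j0lt: "j0 < Suc n * a"
    proof -
      have "j0 < (a - Suc q) * Suc n + Suc n" using r0n j0_def by simp
      also have "\<dots> = (a - q) * Suc n"
      proof -
        have e: "a - q = Suc (a - Suc q)" using qk by arith
        show ?thesis by (simp only: e mult_Suc add.commute)
      qed
      also have "\<dots> \<le> a * Suc n" by (rule mult_le_mono1) simp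
      finally show ?thesis by (simp add: mult.commute)
    qed
    have j0E: "j0 \<noteq> E x" using j0lt Ex by simp
    have dm: "j0 div Suc n = a - Suc q" "j0 mod Suc n = r0"
      using divmod_aux[OF r0n] j0_def by auto
    have idx: "a - Suc (a - Suc q) = q" using qk by simp
    have v1: "F1 s (Inl j0) = y r0" using F1s j0E j0lt dm idx y_def by simp
    have v2: "F1 s' (Inl j0) = y' r0" using F1s' j0E j0lt dm idx y'_def xx aa by simp
    have lt: "F1 s (Inl j0) < F1 s' (Inl j0)" using v1 v2 r0(2) by simp
    have up: "\<forall>j\<in>IT n. (Inl j0, j) \<in> omega_plus_lt \<longrightarrow> F1 s j = F1 s' j"
    proof (intro ballI impI)
      fix j assume j: "j \<in> IT n" "(Inl j0, j) \<in> omega_plus_lt"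
      show "F1 s j = F1 s' j"
      proof (cases j)
        case (Inr r')
        then show ?thesis using F1s F1s' xx by simp
      next
        case (Inl jj)
        then have jj: "j0 < jj" using j(2) by simp
        show ?thesis
        proof (cases "jj = E x \<or> \<not> jj < Suc n * a")
          case True
          then show ?thesis using Inl F1s F1s' xx aa by auto
        next
          case False
          then have jjE: "jj \<noteq> E x" and jja: "jj < Suc n * a" by auto
          define Q where "Q = jj div Suc n"
          define R where "R = jj mod Suc n"
          have Qk: "Q < a" using div_lt_k[OF jja] Q_def by simp
          have QK: "a - Suc q \<le> Q" using divmod_above(1)[OF r0n] jj j0_def Q_def by simp
          have QR: "Q = a - Suc q \<Longrightarrow> r0 < R" using divmod_above(2)[OF r0n] jj j0_def Q_def R_def by simp
          have ix: "a - Suc Q \<le> q" using QK qk by simp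
          have val: "hi (ts ! (a - Suc Q)) R = hi (ts' ! (a - Suc Q)) R"
          proof (cases "a - Suc Q < q")
            case True
            then have "ts ! (a - Suc Q) = ts' ! (a - Suc Q)" using tq by (metis nth_take)
            then show ?thesis by simp
          next
            case False
            then have qq: "a - Suc Q = q" using ix by simp
            then have "Q = a - Suc q" using Qk qk by simp
            then have "r0 < R" by (rule QR)
            moreover have "R \<in> IA n" using R_def by simp
            ultimately have "y R = y' R" using r0(3) by simp
            then show ?thesis using qq y_def y'_def by simp
          qed
          show ?thesis using Inl F1s F1s' xx aa jjE jja val Q_def R_def by simp
        qed
      qed
    qed
    have "Inl j0 \<in> IT n" by blast
    then show ?thesis by (rule opR_intro[OF D(1) D(2) _ lt up])
  qed
qed


lemma T_eq: "omega_pow_omega_plus n = (opD (IT n), opR (IT n) omega_plus_lt)"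
  by (simp add: omega_pow_omega_plus_def omega_pow_eq)

theorem PhiL_iso: "iso (PhiL A) (omega_pow_omega_plus n)"
proof -
  have slT: "slo (omega_pow_omega_plus n)"
    unfolding omega_pow_omega_plus_def by (rule slo_omega_pow[OF slin_oplus])
  have sP: "slo (PhiL A)" by (rule slo_PhiL[OF sA])
  have wP: "wf (snd (PhiL A))" by (rule wf_PhiL[OF sA wA])
  have fP: "fst (PhiL A) = Sq (fst A)" by (simp add: PhiL_def)
  have m2: "smono (omega_pow_omega_plus n) (PhiL A) F2"
    unfolding smono_def T_eq fP using F2_Sq F2_mono by simp
  have m1: "smono (PhiL A) (omega_pow_omega_plus n) F1"
    unfolding smono_def T_eq fP using F1_D F1_mono by simp
  have "opR (IT n) omega_plus_lt \<subseteq> inv_image (snd (PhiL A)) F2"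
    using F2_mono by auto
  then have wT: "wf (snd (omega_pow_omega_plus n))"
    unfolding T_eq using wf_subset[OF wf_inv_image[OF wP]] by simp
  show ?thesis by (rule mutual_iso[OF sP wP slT wT m1 m2])
qed

end


abbreviation ld :: "nat \<Rightarrow> nat list" where "ld \<equiv> list_decode"

definition shp :: "nat list \<Rightarrow> bool" where
  "shp s \<longleftrightarrow> s \<noteq> [] \<and> length s = Suc (hd s)"

definition domlits :: "nat list \<Rightarrow> lit set" where
  "domlits s = (\<lambda>a. Pos (AEq a a)) ` set s"

fun okl :: "lit \<Rightarrow> lit set \<Rightarrow> bool" where
  "okl (Pos (AEq e e')) X \<longleftrightarrow> e = e' \<and> shp (ld e) \<and> domlits (ld e) \<subseteq> X"
| "okl (Neg (AEq e e')) X \<longleftrightarrow> e \<noteq> e' \<and> shp (ld e) \<and> shp (ld e') \<and>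
      domlits (ld e) \<subseteq> X \<and> domlits (ld e') \<subseteq> X"
| "okl (Pos (ALess e e')) X \<longleftrightarrow> shp (ld e) \<and> shp (ld e') \<and>
      domlits (ld e) \<subseteq> X \<and> domlits (ld e') \<subseteq> X \<and>
      (\<exists>i. i < length (ld e) \<and> i < length (ld e') \<and> take i (ld e) = take i (ld e') \<and>
         Pos (ALess (ld e ! i) (ld e' ! i)) \<in> X)"
| "okl (Neg (ALess e e')) X \<longleftrightarrow> shp (ld e) \<and> shp (ld e') \<and>
      domlits (ld e) \<subseteq> X \<and> domlits (ld e') \<subseteq> X \<and>
      (e = e' \<or> (\<exists>i. i < length (ld e) \<and> i < length (ld e') \<and> take i (ld e) = take i (ld e') \<and>
         ld e ! i \<noteq> ld e' ! i \<and> Neg (ALess (ld e ! i) (ld e' ! i)) \<in> X))"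

definition Gam :: "(lit list \<times> lit) set" where
  "Gam = {(\<alpha>, \<phi>). okl \<phi> (set \<alpha>)}"

lemma lit_cases:
  obtains (1) e e' where "\<phi> = Pos (AEq e e')" | (2) e e' where "\<phi> = Neg (AEq e e')"
    | (3) e e' where "\<phi> = Pos (ALess e e')" | (4) e e' where "\<phi> = Neg (ALess e e')"
  by (metis atom.exhaust lit.exhaust)

lemma okl_mono: "okl \<phi> X \<Longrightarrow> X \<subseteq> Y \<Longrightarrow> okl \<phi> Y"
  by (cases \<phi> rule: lit_cases) auto

lemma finite_domlits: "finite (domlits s)"
  by (simp add: domlits_def)

lemma okl_finite: "okl \<phi> X \<Longrightarrow> \<exists>J. finite J \<and> J \<subseteq> X \<and> okl \<phi> J"
proof (cases \<phi> rule: lit_cases)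
  case (1 e e')
  assume "okl \<phi> X" then show ?thesis using 1 finite_domlits
    by (intro exI[of _ "domlits (ld e)"]) auto
next
  case (2 e e')
  assume "okl \<phi> X" then show ?thesis using 2 finite_domlits
    by (intro exI[of _ "domlits (ld e) \<union> domlits (ld e')"]) auto
next
  case (3 e e')
  assume ok: "okl \<phi> X"
  then obtain i where i: "i < length (ld e)" "i < length (ld e')" "take i (ld e) = take i (ld e')"
    "Pos (ALess (ld e ! i) (ld e' ! i)) \<in> X" using 3 by auto
  let ?J = "domlits (ld e) \<union> domlits (ld e') \<union> {Pos (ALess (ld e ! i) (ld e' ! i))}"
  have "okl \<phi> ?J" using 3 ok i by auto
  moreover have "?J \<subseteq> X" using 3 ok i by auto
  ultimately show ?thesis using finite_domlits by (intro exI[of _ ?J]) auto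
next
  case (4 e e')
  assume ok: "okl \<phi> X"
  show ?thesis
  proof (cases "e = e'")
    case True
    then show ?thesis using 4 ok finite_domlits
      by (intro exI[of _ "domlits (ld e) \<union> domlits (ld e')"]) auto
  next
    case False
    then obtain i where i: "i < length (ld e)" "i < length (ld e')" "take i (ld e) = take i (ld e')"
      "ld e ! i \<noteq> ld e' ! i" "Neg (ALess (ld e ! i) (ld e' ! i)) \<in> X" using 4 ok by auto
    let ?J = "domlits (ld e) \<union> domlits (ld e') \<union> {Neg (ALess (ld e ! i) (ld e' ! i))}"
    have "okl \<phi> ?J" using 4 ok i by auto
    moreover have "?J \<subseteq> X" using 4 ok i by auto
    ultimately show ?thesis using finite_domlits by (intro exI[of _ ?J]) auto
  qed
qed

lemma apply_Gam: "apply_op Gam X = {\<phi>. okl \<phi> X}"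
proof (intro set_eqI iffI)
  fix \<phi> assume "\<phi> \<in> apply_op Gam X"
  then obtain \<alpha> where "okl \<phi> (set \<alpha>)" "set \<alpha> \<subseteq> X" by (auto simp: apply_op_def Gam_def)
  then show "\<phi> \<in> {\<phi>. okl \<phi> X}" using okl_mono by auto
next
  fix \<phi> assume "\<phi> \<in> {\<phi>. okl \<phi> X}"
  then have "okl \<phi> X" by simp
  then obtain J where J: "finite J" "J \<subseteq> X" "okl \<phi> J" using okl_finite by blast
  obtain \<alpha> where "set \<alpha> = J" using finite_list[OF J(1)] by auto
  then show "\<phi> \<in> apply_op Gam X" using J by (auto simp: apply_op_def Gam_def)
qed

definition Phi :: "nat struc \<Rightarrow> nat struc" where
  "Phi A = (list_encode ` Sq (fst A),
     {(list_encode s, list_encode s') | s s'. s \<in> Sq (fst A) \<and> s' \<in> Sq (fst A) \<and> lexR (snd A) s s'})"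

lemma is_struc_Phi: "is_struc (Phi A)"
  unfolding is_struc_def Phi_def by auto

lemma iso_PhiL_Phi: "iso (PhiL A) (Phi A)"
  unfolding iso_def
proof (intro exI[of _ list_encode] conjI)
  show "bij_betw list_encode (fst (PhiL A)) (fst (Phi A))"
    unfolding PhiL_def Phi_def by (simp add: bij_betw_def inj_on_def list_encode_eq)
  show "\<forall>x\<in>fst (PhiL A). \<forall>y\<in>fst (PhiL A). (x, y) \<in> snd (PhiL A) \<longleftrightarrow> (list_encode x, list_encode y) \<in> snd (Phi A)"
    unfolding PhiL_def Phi_def by (auto simp: list_encode_eq)
qed

lemma diag_simps:
  assumes "is_struc A"
  shows "Pos (AEq a b) \<in> diag A \<longleftrightarrow> a = b \<and> a \<in> fst A"
    "Neg (AEq a b) \<in> diag A \<longleftrightarrow> a \<in> fst A \<and> b \<in> fst A \<and> a \<noteq> b"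
    "Pos (ALess a b) \<in> diag A \<longleftrightarrow> a \<in> fst A \<and> b \<in> fst A \<and> (a, b) \<in> snd A"
    "Neg (ALess a b) \<in> diag A \<longleftrightarrow> a \<in> fst A \<and> b \<in> fst A \<and> (a, b) \<notin> snd A"
  using assms unfolding diag_def is_struc_def by auto

lemma domlits_sub: assumes "is_struc A" shows "domlits s \<subseteq> diag A \<longleftrightarrow> set s \<subseteq> fst A"
  unfolding domlits_def using diag_simps(1)[OF assms] by auto

lemma Sq_iff: "s \<in> Sq V \<longleftrightarrow> shp s \<and> set s \<subseteq> V"
  unfolding Sq_def shp_def by auto

lemma in_Phi_dom: "e \<in> fst (Phi A) \<longleftrightarrow> ld e \<in> Sq (fst A)"
  unfolding Phi_def by (auto simp: image_iff) (metis list_decode_inverse)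

lemma in_Phi_rel: "(e, e') \<in> snd (Phi A) \<longleftrightarrow> ld e \<in> Sq (fst A) \<and> ld e' \<in> Sq (fst A) \<and> lexR (snd A) (ld e) (ld e')"
  unfolding Phi_def by auto (metis list_decode_inverse)+

lemma not_lexR_iff:
  assumes sl: "slo A" and s: "s \<in> Sq (fst A)" and s': "s' \<in> Sq (fst A)"
  shows "\<not> lexR (snd A) s s' \<longleftrightarrow> s = s' \<or> (\<exists>i. i < length s \<and> i < length s' \<and> take i s = take i s' \<and>
         s ! i \<noteq> s' ! i \<and> (s ! i, s' ! i) \<notin> snd A)"
proof
  assume nl: "\<not> lexR (snd A) s s'"
  show "s = s' \<or> (\<exists>i. i < length s \<and> i < length s' \<and> take i s = take i s' \<and>
         s ! i \<noteq> s' ! i \<and> (s ! i, s' ! i) \<notin> snd A)"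
  proof (cases "s = s'")
    case False
    then obtain i where i: "i < length s" "i < length s'" "take i s = take i s'" "s ! i \<noteq> s' ! i"
      using first_diff[OF s s'] by blast
    then have "(s ! i, s' ! i) \<notin> snd A" using nl unfolding lexR_def by blast
    then show ?thesis using i by blast
  qed simp
next
  assume "s = s' \<or> (\<exists>i. i < length s \<and> i < length s' \<and> take i s = take i s' \<and>
         s ! i \<noteq> s' ! i \<and> (s ! i, s' ! i) \<notin> snd A)"
  then show "\<not> lexR (snd A) s s'"
  proof
    assume "s = s'"
    then show ?thesis using lexR_irrefl sl unfolding slo_def by blast
  next
    assume "\<exists>i. i < length s \<and> i < length s' \<and> take i s = take i s' \<and>
         s ! i \<noteq> s' ! i \<and> (s ! i, s' ! i) \<notin> snd A"
    then obtain i where i: "i < length s" "i < length s'" "take i s = take i s'"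
         "s ! i \<noteq> s' ! i" "(s ! i, s' ! i) \<notin> snd A" by blast
    show ?thesis
    proof
      assume "lexR (snd A) s s'"
      then obtain j where j: "j < length s" "j < length s'" "take j s = take j s'" "(s ! j, s' ! j) \<in> snd A"
        unfolding lexR_def by blast
      consider "j < i" | "j = i" | "i < j" by arith
      then show False
      proof cases
        case 1
        then have "s ! j = s' ! j" using i(3) by (metis nth_take)
        then show False using j(4) sl unfolding slo_def by auto
      next
        case 2 then show False using i j by simp
      next
        case 3
        then have "s ! i = s' ! i" using j(3) by (metis nth_take)
        then show False using i(4) by simp
      qed
    qed
  qed
qed

theorem apply_Gam_diag:
  assumes st: "is_struc A" and sl: "slo A"
  shows "apply_op Gam (diag A) = diag (Phi A)"
proof (intro set_eqI)
  fix \<phi>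
  have PS: "is_struc (Phi A)" by (rule is_struc_Phi)
  show "\<phi> \<in> apply_op Gam (diag A) \<longleftrightarrow> \<phi> \<in> diag (Phi A)"
    unfolding apply_Gam mem_Collect_eq
  proof (cases \<phi> rule: lit_cases)
    case (1 e e')
    then show "okl \<phi> (diag A) = (\<phi> \<in> diag (Phi A))"
      using diag_simps[OF PS] domlits_sub[OF st] in_Phi_dom Sq_iff by auto
  next
    case (2 e e')
    then show "okl \<phi> (diag A) = (\<phi> \<in> diag (Phi A))"
      using diag_simps[OF PS] domlits_sub[OF st] in_Phi_dom Sq_iff by auto
  next
    case (3 e e')
    have "okl \<phi> (diag A) \<longleftrightarrow> ld e \<in> Sq (fst A) \<and> ld e' \<in> Sq (fst A) \<and> lexR (snd A) (ld e) (ld e')"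
    proof
      assume ok: "okl \<phi> (diag A)"
      then have ss: "ld e \<in> Sq (fst A)" "ld e' \<in> Sq (fst A)"
        using 3 domlits_sub[OF st] Sq_iff by auto
      obtain i where i: "i < length (ld e)" "i < length (ld e')" "take i (ld e) = take i (ld e')"
        "Pos (ALess (ld e ! i) (ld e' ! i)) \<in> diag A" using ok 3 by auto
      then have "(ld e ! i, ld e' ! i) \<in> snd A" using diag_simps(3)[OF st] by auto
      then show "ld e \<in> Sq (fst A) \<and> ld e' \<in> Sq (fst A) \<and> lexR (snd A) (ld e) (ld e')"
        using ss i unfolding lexR_def by blast
    next
      assume r: "ld e \<in> Sq (fst A) \<and> ld e' \<in> Sq (fst A) \<and> lexR (snd A) (ld e) (ld e')"
      then obtain i where i: "i < length (ld e)" "i < length (ld e')" "take i (ld e) = take i (ld e')"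
        "(ld e ! i, ld e' ! i) \<in> snd A" unfolding lexR_def by blast
      have "ld e ! i \<in> fst A" "ld e' ! i \<in> fst A" using r i by (auto simp: Sq_def)
      then have "Pos (ALess (ld e ! i) (ld e' ! i)) \<in> diag A" using diag_simps(3)[OF st] i by auto
      then show "okl \<phi> (diag A)" using 3 r i domlits_sub[OF st] Sq_iff by auto
    qed
    then show "okl \<phi> (diag A) = (\<phi> \<in> diag (Phi A))"
      using 3 diag_simps(3)[OF PS] in_Phi_rel in_Phi_dom by auto
  next
    case (4 e e')
    have "okl \<phi> (diag A) \<longleftrightarrow> ld e \<in> Sq (fst A) \<and> ld e' \<in> Sq (fst A) \<and> \<not> lexR (snd A) (ld e) (ld e')"
    proof
      assume ok: "okl \<phi> (diag A)"
      then have ss: "ld e \<in> Sq (fst A)" "ld e' \<in> Sq (fst A)"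
        using 4 domlits_sub[OF st] Sq_iff by auto
      have "e = e' \<or> (\<exists>i. i < length (ld e) \<and> i < length (ld e') \<and> take i (ld e) = take i (ld e') \<and>
         ld e ! i \<noteq> ld e' ! i \<and> Neg (ALess (ld e ! i) (ld e' ! i)) \<in> diag A)" using ok 4 by auto
      then have "ld e = ld e' \<or> (\<exists>i. i < length (ld e) \<and> i < length (ld e') \<and> take i (ld e) = take i (ld e') \<and>
         ld e ! i \<noteq> ld e' ! i \<and> (ld e ! i, ld e' ! i) \<notin> snd A)" using diag_simps(4)[OF st] by auto
      then show "ld e \<in> Sq (fst A) \<and> ld e' \<in> Sq (fst A) \<and> \<not> lexR (snd A) (ld e) (ld e')"
        using not_lexR_iff[OF sl ss] ss by blast
    next
      assume r: "ld e \<in> Sq (fst A) \<and> ld e' \<in> Sq (fst A) \<and> \<not> lexR (snd A) (ld e) (ld e')"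
      then have "ld e = ld e' \<or> (\<exists>i. i < length (ld e) \<and> i < length (ld e') \<and> take i (ld e) = take i (ld e') \<and>
         ld e ! i \<noteq> ld e' ! i \<and> (ld e ! i, ld e' ! i) \<notin> snd A)" using not_lexR_iff[OF sl] by blast
      then have "e = e' \<or> (\<exists>i. i < length (ld e) \<and> i < length (ld e') \<and> take i (ld e) = take i (ld e') \<and>
         ld e ! i \<noteq> ld e' ! i \<and> Neg (ALess (ld e ! i) (ld e' ! i)) \<in> diag A)"
      proof
        assume "ld e = ld e'" then have "e = e'" by (metis list_decode_inverse)
        then show ?thesis by simp
      next
        assume "\<exists>i. i < length (ld e) \<and> i < length (ld e') \<and> take i (ld e) = take i (ld e') \<and>
         ld e ! i \<noteq> ld e' ! i \<and> (ld e ! i, ld e' ! i) \<notin> snd A"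
        then obtain i where i: "i < length (ld e)" "i < length (ld e')" "take i (ld e) = take i (ld e')"
         "ld e ! i \<noteq> ld e' ! i" "(ld e ! i, ld e' ! i) \<notin> snd A" by blast
        have "ld e ! i \<in> fst A" "ld e' ! i \<in> fst A" using r i by (auto simp: Sq_def)
        then have "Neg (ALess (ld e ! i) (ld e' ! i)) \<in> diag A" using diag_simps(4)[OF st] i by auto
        then show ?thesis using i by blast
      qed
      then show "okl \<phi> (diag A)" using 4 r domlits_sub[OF st] Sq_iff by auto
    qed
    then show "okl \<phi> (diag A) = (\<phi> \<in> diag (Phi A))"
      using 4 diag_simps(4)[OF PS] in_Phi_rel in_Phi_dom by auto
  qed
qed


lemma eval_det: "eval f xs y \<Longrightarrow> eval f xs y' \<Longrightarrow> y = y'"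
proof (induction arbitrary: y' rule: eval.induct)
  case (ev_Z xs)
  from ev_Z.prems show ?case by (cases rule: eval.cases) auto
next
  case (ev_S x xs)
  from ev_S.prems show ?case by (cases rule: eval.cases) auto
next
  case (ev_Proj i xs)
  from ev_Proj.prems show ?case by (cases rule: eval.cases) auto
next
  case (ev_Comp ys gs xs f z)
  from ev_Comp.prems obtain ys' where y1: "length ys' = length gs"
    "\<forall>i<length gs. eval (gs ! i) xs (ys' ! i)" "eval f ys' y'"
    by (cases rule: eval.cases) auto
  have "ys = ys'"
  proof (rule nth_equalityI)
    show "length ys = length ys'" using ev_Comp.hyps(1) y1(1) by simp
    fix i assume "i < length ys"
    then have "i < length gs" using ev_Comp.hyps(1) by simp
    then show "ys ! i = ys' ! i" using ev_Comp.IH(1) y1(2) by blast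
  qed
  then show ?case using ev_Comp.IH(2) y1(3) by blast
next
  case (ev_Prec0 f xs y g)
  from ev_Prec0.prems have "eval f xs y'" by (cases rule: eval.cases) auto
  then show ?case using ev_Prec0.IH by blast
next
  case (ev_PrecS f g n xs y z)
  from ev_PrecS.prems obtain y2 where y2: "eval (Prec f g) (n # xs) y2" "eval g (n # y2 # xs) y'"
    by (cases rule: eval.cases) auto
  then have "y = y2" using ev_PrecS.IH(1) by blast
  then show ?case using ev_PrecS.IH(2) y2(2) by blast
next
  case (ev_Mu f y xs)
  from ev_Mu.prems have h1: "eval f (y' # xs) 0" and h2: "\<forall>k<y'. \<exists>v. eval f (k # xs) v \<and> v \<noteq> 0"
    by (cases rule: eval.cases, auto)+
  show ?case
  proof (rule ccontr)
    assume ne: "y \<noteq> y'"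
    then consider "y < y'" | "y' < y" by arith
    then show False
    proof cases
      case 1
      then obtain v where "eval f (y # xs) v" "v \<noteq> 0" using h2 by blast
      then show False using ev_Mu.IH(1) by blast
    next
      case 2
      then obtain v where "eval f (y' # xs) v \<and> (\<forall>w. eval f (y' # xs) w \<longrightarrow> v = w)" "v \<noteq> 0"
        using ev_Mu.IH(2) by blast
      then show False using h1 by blast
    qed
  qed
qed

definition rcomp :: "nat \<Rightarrow> (nat list \<Rightarrow> nat) \<Rightarrow> bool" where
  "rcomp n F \<longleftrightarrow> (\<exists>f. \<forall>xs. length xs = n \<longrightarrow> eval f xs (F xs))"

lemma rcomp_zero: "rcomp n (\<lambda>_. 0)"
  unfolding rcomp_def by (rule exI[of _ Zf]) (auto intro: ev_Z)

lemma rcomp_proj: "i < n \<Longrightarrow> rcomp n (\<lambda>xs. xs ! i)"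
  unfolding rcomp_def by (rule exI[of _ "Proj i"]) (auto intro: ev_Proj)

lemma rcomp_compose:
  assumes G: "rcomp m G" and Fs: "\<And>i. i < m \<Longrightarrow> rcomp n (Fs i)"
  shows "rcomp n (\<lambda>xs. G (map (\<lambda>i. Fs i xs) [0..<m]))"
proof -
  obtain g where g: "\<forall>ys. length ys = m \<longrightarrow> eval g ys (G ys)" using G unfolding rcomp_def by blast
  have "\<forall>i. \<exists>f. i < m \<longrightarrow> (\<forall>xs. length xs = n \<longrightarrow> eval f xs (Fs i xs))"
    using Fs unfolding rcomp_def by blast
  then obtain fs where fs: "\<And>i. i < m \<Longrightarrow> \<forall>xs. length xs = n \<longrightarrow> eval (fs i) xs (Fs i xs)"
    by metis
  show ?thesis unfolding rcomp_def
  proof (intro exI[of _ "Comp g (map fs [0..<m])"] allI impI)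
    fix xs :: "nat list" assume len: "length xs = n"
    show "eval (Comp g (map fs [0..<m])) xs (G (map (\<lambda>i. Fs i xs) [0..<m]))"
    proof (rule ev_Comp)
      show "length (map (\<lambda>i. Fs i xs) [0..<m]) = length (map fs [0..<m])" by simp
      show "\<forall>i<length (map fs [0..<m]). eval (map fs [0..<m] ! i) xs (map (\<lambda>i. Fs i xs) [0..<m] ! i)"
        using fs len by simp
      show "eval g (map (\<lambda>i. Fs i xs) [0..<m]) (G (map (\<lambda>i. Fs i xs) [0..<m]))" using g by simp
    qed
  qed
qed

lemma rcomp_op1:
  assumes "rcomp 1 G" "rcomp n F1"
  shows "rcomp n (\<lambda>xs. G [F1 xs])"
  using rcomp_compose[OF assms(1), of n "\<lambda>i. F1"] assms(2) by simp

lemma rcomp_op2: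
  assumes "rcomp 2 G" "rcomp n F1" "rcomp n F2"
  shows "rcomp n (\<lambda>xs. G [F1 xs, F2 xs])"
proof -
  have "rcomp n (\<lambda>xs. G (map (\<lambda>i. (if i = 0 then F1 else F2) xs) [0..<2]))"
    using assms by (intro rcomp_compose) auto
  moreover have "[0..<2] = [0, 1::nat]" by (simp add: upt_rec)
  ultimately show ?thesis by simp
qed

lemma rcomp_op3:
  assumes "rcomp 3 G" "rcomp n F1" "rcomp n F2" "rcomp n F3"
  shows "rcomp n (\<lambda>xs. G [F1 xs, F2 xs, F3 xs])"
proof -
  have "rcomp n (\<lambda>xs. G (map (\<lambda>i. (if i = 0 then F1 else if i = 1 then F2 else F3) xs) [0..<3]))"
    using assms by (intro rcomp_compose) auto
  moreover have "[0..<3] = [0, 1, 2::nat]" by (simp add: upt_rec)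
  ultimately show ?thesis by simp
qed

lemma rcomp_Suc_base: "rcomp 1 (\<lambda>xs. Suc (xs ! 0))"
  unfolding rcomp_def
proof (intro exI[of _ Sf] allI impI)
  fix xs :: "nat list" assume "length xs = 1"
  then obtain x where "xs = [x]" by (cases xs) auto
  then show "eval Sf xs (Suc (xs ! 0))" by (auto intro: ev_S)
qed

lemma rcomp_Suc: "rcomp n F \<Longrightarrow> rcomp n (\<lambda>xs. Suc (F xs))"
  using rcomp_op1[OF rcomp_Suc_base] by simp

lemma rcomp_const: "rcomp n (\<lambda>_. k)"
  by (induction k) (auto intro: rcomp_zero rcomp_Suc)

primrec precf :: "(nat list \<Rightarrow> nat) \<Rightarrow> (nat list \<Rightarrow> nat) \<Rightarrow> nat \<Rightarrow> nat list \<Rightarrow> nat" where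
  "precf F G 0 ys = F ys"
| "precf F G (Suc k) ys = G (k # precf F G k ys # ys)"

lemma rcomp_prec:
  assumes F: "rcomp n F" and G: "rcomp (Suc (Suc n)) G"
  shows "rcomp (Suc n) (\<lambda>xs. precf F G (hd xs) (tl xs))"
proof -
  obtain f where f: "\<forall>ys. length ys = n \<longrightarrow> eval f ys (F ys)" using F unfolding rcomp_def by blast
  obtain g where g: "\<forall>ys. length ys = Suc (Suc n) \<longrightarrow> eval g ys (G ys)" using G unfolding rcomp_def by blast
  have main: "\<And>ys. length ys = n \<Longrightarrow> eval (Prec f g) (k # ys) (precf F G k ys)" for k
  proof (induction k)
    case 0 then show ?case using f by (auto intro: ev_Prec0)
  next
    case (Suc k)
    have "eval (Prec f g) (k # ys) (precf F G k ys)" using Suc by blast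
    moreover have "eval g (k # precf F G k ys # ys) (G (k # precf F G k ys # ys))" using g Suc.prems by simp
    ultimately show ?case by (simp add: ev_PrecS)
  qed
  show ?thesis unfolding rcomp_def
  proof (intro exI[of _ "Prec f g"] allI impI)
    fix xs :: "nat list" assume "length xs = Suc n"
    then obtain k ys where "xs = k # ys" "length ys = n" by (cases xs) auto
    then show "eval (Prec f g) xs (precf F G (hd xs) (tl xs))" using main by simp
  qed
qed

lemma rcomp_cong: "rcomp n F \<Longrightarrow> (\<And>xs. length xs = n \<Longrightarrow> F xs = G xs) \<Longrightarrow> rcomp n G"
  unfolding rcomp_def by metis

lemma rcomp_add_base: "rcomp 2 (\<lambda>xs. xs ! 0 + xs ! 1)" (is "rcomp _ ?G")
proof -
  have c: "rcomp (Suc 1) (\<lambda>xs. precf (\<lambda>ys. ys ! 0) (\<lambda>ys. Suc (ys ! 1)) (hd xs) (tl xs))"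
    by (rule rcomp_prec) (auto intro: rcomp_proj rcomp_Suc)
  have "precf (\<lambda>ys. ys ! 0) (\<lambda>ys. Suc (ys ! 1)) k ys = k + ys ! 0" for k ys
    by (induction k) auto
  then have "rcomp (Suc 1) ?G"
    by (intro rcomp_cong[OF c]) (auto simp: length_Suc_conv)
  then show ?thesis by (simp add: numeral_2_eq_2)
qed

lemma rcomp_add: "rcomp n F1 \<Longrightarrow> rcomp n F2 \<Longrightarrow> rcomp n (\<lambda>xs. F1 xs + F2 xs)"
  using rcomp_op2[OF rcomp_add_base] by simp

lemma rcomp_mult_base: "rcomp 2 (\<lambda>xs. xs ! 0 * xs ! 1)" (is "rcomp _ ?G")
proof -
  have c: "rcomp (Suc 1) (\<lambda>xs. precf (\<lambda>ys. 0) (\<lambda>ys. ys ! 1 + ys ! 2) (hd xs) (tl xs))"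
  proof (rule rcomp_prec)
    show "rcomp 1 (\<lambda>ys. 0)" by (rule rcomp_zero)
    show "rcomp (Suc (Suc 1)) (\<lambda>ys. ys ! 1 + ys ! 2)" by (intro rcomp_add rcomp_proj) simp_all
  qed
  have "precf (\<lambda>ys. 0) (\<lambda>ys. ys ! 1 + ys ! 2) k ys = k * ys ! 0" for k ys
    by (induction k) auto
  then have "rcomp (Suc 1) ?G"
    by (intro rcomp_cong[OF c]) (auto simp: length_Suc_conv)
  then show ?thesis by (simp add: numeral_2_eq_2)
qed

lemma rcomp_mult: "rcomp n F1 \<Longrightarrow> rcomp n F2 \<Longrightarrow> rcomp n (\<lambda>xs. F1 xs * F2 xs)"
  using rcomp_op2[OF rcomp_mult_base] by simp

lemma rcomp_pred_base: "rcomp 1 (\<lambda>xs. xs ! 0 - 1)" (is "rcomp _ ?G")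
proof -
  have c: "rcomp (Suc 0) (\<lambda>xs. precf (\<lambda>ys. 0) (\<lambda>ys. ys ! 0) (hd xs) (tl xs))"
    by (rule rcomp_prec) (auto intro: rcomp_proj rcomp_zero)
  have "precf (\<lambda>ys. 0) (\<lambda>ys. ys ! 0) k ys = k - 1" for k ys
    by (cases k) auto
  then have "rcomp (Suc 0) ?G"
    by (intro rcomp_cong[OF c]) (auto simp: length_Suc_conv)
  then show ?thesis by (simp add: numeral_2_eq_2)
qed

lemma rcomp_sub_base: "rcomp 2 (\<lambda>xs. xs ! 1 - xs ! 0)" (is "rcomp _ ?G")
proof -
  have c: "rcomp (Suc 1) (\<lambda>xs. precf (\<lambda>ys. ys ! 0) (\<lambda>ys. ys ! 1 - 1) (hd xs) (tl xs))"
    by (rule rcomp_prec)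
      (auto intro: rcomp_proj rcomp_op1[OF rcomp_pred_base, of _ "\<lambda>ys. ys ! 1", simplified])
  have "precf (\<lambda>ys. ys ! 0) (\<lambda>ys. ys ! 1 - 1) k ys = ys ! 0 - k" for k ys
    by (induction k) auto
  then have "rcomp (Suc 1) ?G"
    by (intro rcomp_cong[OF c]) (auto simp: length_Suc_conv)
  then show ?thesis by (simp add: numeral_2_eq_2)
qed

lemma rcomp_sub: "rcomp n F1 \<Longrightarrow> rcomp n F2 \<Longrightarrow> rcomp n (\<lambda>xs. F1 xs - F2 xs)"
  using rcomp_op2[OF rcomp_sub_base, of n F2 F1] by simp


definition cpred :: "nat \<Rightarrow> (nat list \<Rightarrow> bool) \<Rightarrow> bool" where
  "cpred n P \<longleftrightarrow> rcomp n (\<lambda>xs. if P xs then 1 else 0)"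

lemma rcomp_cong': assumes "rcomp n F" "\<And>xs. F xs = G xs" shows "rcomp n G"
proof -
  have "F = G" using assms(2) by (rule ext)
  then show ?thesis using assms(1) by simp
qed

lemma cpred_cong: assumes "cpred n P" "\<And>xs. length xs = n \<Longrightarrow> P xs = Q xs" shows "cpred n Q"
  using assms(1) unfolding cpred_def by (rule rcomp_cong) (simp add: assms(2))

lemma cpred_le: assumes "rcomp n F" "rcomp n G" shows "cpred n (\<lambda>xs. F xs \<le> G xs)"
proof -
  have "rcomp n (\<lambda>xs. 1 - (F xs - G xs))" by (intro rcomp_sub rcomp_const assms)
  then show ?thesis unfolding cpred_def by (rule rcomp_cong') auto
qed

lemma cpred_lt: "rcomp n F \<Longrightarrow> rcomp n G \<Longrightarrow> cpred n (\<lambda>xs. F xs < G xs)"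
  using cpred_le[OF rcomp_Suc[of n F], of G] by (simp add: Suc_le_eq)

lemma cpred_not: assumes "cpred n P" shows "cpred n (\<lambda>xs. \<not> P xs)"
proof -
  have "rcomp n (\<lambda>xs. 1 - (if P xs then 1 else 0))"
    using assms unfolding cpred_def by (intro rcomp_sub rcomp_const)
  then show ?thesis unfolding cpred_def by (rule rcomp_cong') auto
qed

lemma cpred_and: assumes "cpred n P" "cpred n Q" shows "cpred n (\<lambda>xs. P xs \<and> Q xs)"
proof -
  have "rcomp n (\<lambda>xs. (if P xs then 1 else 0) * (if Q xs then 1 else 0))"
    using assms unfolding cpred_def by (intro rcomp_mult)
  then show ?thesis unfolding cpred_def by (rule rcomp_cong') auto
qed

lemma cpred_or: "cpred n P \<Longrightarrow> cpred n Q \<Longrightarrow> cpred n (\<lambda>xs. P xs \<or> Q xs)"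
proof -
  assume "cpred n P" "cpred n Q"
  then have "cpred n (\<lambda>xs. \<not> (\<not> P xs \<and> \<not> Q xs))" by (intro cpred_not cpred_and)
  then show ?thesis by simp
qed

lemma cpred_eq: "rcomp n F \<Longrightarrow> rcomp n G \<Longrightarrow> cpred n (\<lambda>xs. F xs = G xs)"
proof -
  assume "rcomp n F" "rcomp n G"
  then have "cpred n (\<lambda>xs. F xs \<le> G xs \<and> G xs \<le> F xs)" by (intro cpred_and cpred_le)
  then show ?thesis by (rule cpred_cong) auto
qed

lemma cpred_const: "cpred n (\<lambda>_. b)"
  unfolding cpred_def by (cases b) (auto intro: rcomp_const)

lemma rcomp_if: "cpred n P \<Longrightarrow> rcomp n F \<Longrightarrow> rcomp n G \<Longrightarrow> rcomp n (\<lambda>xs. if P xs then F xs else G xs)"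
proof -
  assume p: "cpred n P" and f: "rcomp n F" and g: "rcomp n G"
  have np: "cpred n (\<lambda>xs. \<not> P xs)" using p by (rule cpred_not)
  have "rcomp n (\<lambda>xs. (if P xs then 1 else 0) * F xs + (if \<not> P xs then 1 else 0) * G xs)"
    using p np f g unfolding cpred_def by (intro rcomp_add rcomp_mult)
  then show ?thesis by (rule rcomp_cong') auto
qed

lemma map_upt_Suc_nth: "length ys = Suc n \<Longrightarrow> map (\<lambda>i. ys ! Suc i) [0..<n] = tl ys"
  by (cases ys) (auto intro: nth_equalityI)

lemma rcomp_shift: "rcomp n F \<Longrightarrow> rcomp (Suc n) (\<lambda>ys. F (tl ys))"
proof -
  assume F: "rcomp n F"
  have "rcomp (Suc n) (\<lambda>ys. F (map (\<lambda>i. ys ! Suc i) [0..<n]))"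
    using F by (intro rcomp_compose) (auto intro: rcomp_proj)
  then show ?thesis by (rule rcomp_cong) (simp add: map_upt_Suc_nth)
qed

lemma cpred_shift: "cpred n P \<Longrightarrow> cpred (Suc n) (\<lambda>ys. P (tl ys))"
  unfolding cpred_def by (drule rcomp_shift) simp

lemma rcomp_hd: "rcomp (Suc n) (\<lambda>ys. hd ys)"
proof (rule rcomp_cong[OF rcomp_proj[of 0]])
  fix xs :: "nat list" assume "length xs = Suc n"
  then show "xs ! 0 = hd xs" by (cases xs) auto
qed simp

lemma rcomp_reindex:
  assumes F: "rcomp m F" and idx: "\<And>i. i < m \<Longrightarrow> idx i < n"
  shows "rcomp n (\<lambda>zs. F (map (\<lambda>i. zs ! idx i) [0..<m]))"
  using F idx by (intro rcomp_compose) (auto intro: rcomp_proj)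

lemma rcomp_cons:
  assumes F: "rcomp (Suc n) F" and B: "rcomp n B"
  shows "rcomp n (\<lambda>xs. F (B xs # xs))"
proof -
  have c: "rcomp n (\<lambda>xs. F (map (\<lambda>i. (if i = 0 then B else (\<lambda>xs. xs ! (i - 1))) xs) [0..<Suc n]))"
    using F B by (intro rcomp_compose) (auto intro: rcomp_proj)
  have eq: "map (\<lambda>i. (if i = 0 then B else (\<lambda>xs. xs ! (i - 1))) xs) [0..<Suc n] = B xs # xs"
    if "length xs = n" for xs
  proof (rule nth_equalityI)
    show "length (map (\<lambda>i. (if i = 0 then B else (\<lambda>xs. xs ! (i - 1))) xs) [0..<Suc n]) = length (B xs # xs)"
      using that by simp
    fix i assume "i < length (map (\<lambda>i. (if i = 0 then B else (\<lambda>xs. xs ! (i - 1))) xs) [0..<Suc n])"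
    then have "i < Suc n" by simp
    then show "map (\<lambda>i. (if i = 0 then B else (\<lambda>xs. xs ! (i - 1))) xs) [0..<Suc n] ! i = (B xs # xs) ! i"
      by (cases i) (simp_all del: upt_Suc)
  qed
  show ?thesis by (rule rcomp_cong[OF c]) (simp add: eq del: upt_Suc)
qed

lemma rcomp_bsum0:
  assumes F: "rcomp (Suc n) F"
  shows "rcomp (Suc n) (\<lambda>ys. \<Sum>t<hd ys. F (t # tl ys))"
proof -
  have F2: "rcomp (Suc (Suc n)) (\<lambda>zs. F (zs ! 0 # tl (tl zs)))"
  proof -
    have c: "rcomp (Suc (Suc n)) (\<lambda>zs. F (map (\<lambda>i. zs ! (if i = 0 then 0 else Suc i)) [0..<Suc n]))"
      using F by (rule rcomp_reindex) auto
    have eq: "map (\<lambda>i. zs ! (if i = 0 then 0 else Suc i)) [0..<Suc n] = zs ! 0 # tl (tl zs)"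
      if "length zs = Suc (Suc n)" for zs
    proof (rule nth_equalityI)
      show "length (map (\<lambda>i. zs ! (if i = 0 then 0 else Suc i)) [0..<Suc n]) = length (zs ! 0 # tl (tl zs))"
        using that by simp
      fix i assume "i < length (map (\<lambda>i. zs ! (if i = 0 then 0 else Suc i)) [0..<Suc n])"
      then have "i < Suc n" by simp
      then show "map (\<lambda>i. zs ! (if i = 0 then 0 else Suc i)) [0..<Suc n] ! i = (zs ! 0 # tl (tl zs)) ! i"
        using that by (cases i) (simp_all add: nth_tl del: upt_Suc)
    qed
    show ?thesis by (rule rcomp_cong[OF c]) (simp add: eq del: upt_Suc)
  qed
  have G: "rcomp (Suc (Suc n)) (\<lambda>zs. zs ! 1 + F (zs ! 0 # tl (tl zs)))"
    by (rule rcomp_add[OF rcomp_proj F2]) simp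
  have P: "rcomp (Suc n) (\<lambda>ys. precf (\<lambda>_. 0) (\<lambda>zs. zs ! 1 + F (zs ! 0 # tl (tl zs))) (hd ys) (tl ys))"
    by (rule rcomp_prec[OF rcomp_zero G])
  have "precf (\<lambda>_. 0) (\<lambda>zs. zs ! 1 + F (zs ! 0 # tl (tl zs))) k xs = (\<Sum>t<k. F (t # xs))" for k xs
    by (induction k) auto
  then show ?thesis by (intro rcomp_cong'[OF P]) simp
qed

lemma rcomp_bsum:
  assumes F: "rcomp (Suc n) F" and B: "rcomp n B"
  shows "rcomp n (\<lambda>xs. \<Sum>t<B xs. F (t # xs))"
  using rcomp_cons[OF rcomp_bsum0[OF F] B] by simp

lemma sum_ind_pos: "(0 < (\<Sum>t<(b::nat). if Q t then 1 else 0::nat)) \<longleftrightarrow> (\<exists>t<b. Q t)"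
proof
  assume p: "0 < (\<Sum>t<b. if Q t then 1 else 0::nat)"
  show "\<exists>t<b. Q t"
  proof (rule ccontr)
    assume "\<not> (\<exists>t<b. Q t)"
    then have "(\<Sum>t<b. if Q t then 1 else 0::nat) = 0" by (intro sum.neutral) auto
    then show False using p by simp
  qed
next
  assume "\<exists>t<b. Q t"
  then obtain t where t: "t < b" "Q t" by blast
  have "(if Q t then 1 else 0::nat) \<le> (\<Sum>t<b. if Q t then 1 else 0::nat)"
    by (rule member_le_sum) (use t in auto)
  then show "0 < (\<Sum>t<b. if Q t then 1 else 0::nat)" using t by simp
qed

lemma cpred_bex:
  assumes P: "cpred (Suc n) P" and B: "rcomp n B"
  shows "cpred n (\<lambda>xs. \<exists>t<B xs. P (t # xs))"
proof -
  have "rcomp n (\<lambda>xs. \<Sum>t<B xs. (\<lambda>ys. if P ys then 1 else 0) (t # xs))"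
    using P B unfolding cpred_def by (rule rcomp_bsum)
  then have s: "rcomp n (\<lambda>xs. \<Sum>t<B xs. (if P (t # xs) then 1 else 0::nat))" by simp
  have "cpred n (\<lambda>xs. 0 < (\<Sum>t<B xs. (if P (t # xs) then 1 else 0::nat)))"
    using cpred_lt[OF rcomp_zero s] by simp
  then show ?thesis by (rule cpred_cong) (simp only: sum_ind_pos)
qed

lemma cpred_ball:
  assumes P: "cpred (Suc n) P" and B: "rcomp n B"
  shows "cpred n (\<lambda>xs. \<forall>t<B xs. P (t # xs))"
proof -
  have "cpred n (\<lambda>xs. \<not> (\<exists>t<B xs. \<not> P (t # xs)))"
    by (intro cpred_not cpred_bex[OF _ B] cpred_not[OF P])
  then show ?thesis by (rule cpred_cong) auto
qed

lemma rcomp_iter_base: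
  assumes H: "rcomp 1 H"
  shows "rcomp 2 (\<lambda>xs. ((\<lambda>x. H [x]) ^^ (xs ! 0)) (xs ! 1))"
proof -
  have G: "rcomp (Suc (Suc 1)) (\<lambda>zs. H [zs ! 1])"
    by (rule rcomp_op1[OF H rcomp_proj]) simp
  have P: "rcomp (Suc 1) (\<lambda>ys. precf (\<lambda>zs. zs ! 0) (\<lambda>zs. H [zs ! 1]) (hd ys) (tl ys))"
    by (rule rcomp_prec[OF rcomp_proj G]) simp
  have "precf (\<lambda>zs. zs ! 0) (\<lambda>zs. H [zs ! 1]) k xs = ((\<lambda>x. H [x]) ^^ k) (xs ! 0)" for k xs
    by (induction k) auto
  then have "rcomp (Suc 1) (\<lambda>xs. ((\<lambda>x. H [x]) ^^ (xs ! 0)) (xs ! 1))"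
    by (intro rcomp_cong[OF P]) (auto simp: length_Suc_conv)
  then show ?thesis by (simp add: numeral_2_eq_2)
qed

lemma rcomp_iter:
  assumes H: "rcomp 1 H" and K: "rcomp n K" and C: "rcomp n C"
  shows "rcomp n (\<lambda>xs. ((\<lambda>x. H [x]) ^^ (K xs)) (C xs))"
  using rcomp_op2[OF rcomp_iter_base[OF H] K C] by simp


lemma rcomp_tri_base: "rcomp 1 (\<lambda>xs. triangle (xs ! 0))"
proof -
  have G: "rcomp (Suc (Suc 0)) (\<lambda>zs. zs ! 1 + Suc (zs ! 0))"
    by (intro rcomp_add rcomp_Suc rcomp_proj) simp_all
  have P: "rcomp (Suc 0) (\<lambda>ys. precf (\<lambda>_. 0) (\<lambda>zs. zs ! 1 + Suc (zs ! 0)) (hd ys) (tl ys))"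
    by (rule rcomp_prec[OF rcomp_zero G])
  have "precf (\<lambda>_. 0) (\<lambda>zs. zs ! 1 + Suc (zs ! 0)) k ys = triangle k" for k ys
    by (induction k) auto
  then have "rcomp (Suc 0) (\<lambda>xs. triangle (xs ! 0))"
    by (intro rcomp_cong[OF P]) (auto simp: length_Suc_conv)
  then show ?thesis by simp
qed

lemma rcomp_tri: "rcomp n F \<Longrightarrow> rcomp n (\<lambda>xs. triangle (F xs))"
  using rcomp_op1[OF rcomp_tri_base] by simp

lemma rcomp_pe: "rcomp n F \<Longrightarrow> rcomp n G \<Longrightarrow> rcomp n (\<lambda>xs. prod_encode (F xs, G xs))"
  unfolding prod_encode_def by (simp add: rcomp_add rcomp_tri)

definition Sroot :: "nat \<Rightarrow> nat" where
  "Sroot z = (\<Sum>t<z. if triangle (Suc t) \<le> z then 1 else 0)"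

lemma rcomp_Sroot: "rcomp n F \<Longrightarrow> rcomp n (\<lambda>xs. Sroot (F xs))"
proof -
  assume F: "rcomp n F"
  have "cpred (Suc n) (\<lambda>ys. triangle (Suc (hd ys)) \<le> F (tl ys))"
    by (intro cpred_le rcomp_tri rcomp_Suc rcomp_hd rcomp_shift F)
  then have "rcomp n (\<lambda>xs. \<Sum>t<F xs. (\<lambda>ys. if triangle (Suc (hd ys)) \<le> F (tl ys) then 1 else 0) (t # xs))"
    unfolding cpred_def by (rule rcomp_bsum[OF _ F])
  then show ?thesis unfolding Sroot_def by simp
qed

lemma triangle_mono: "a \<le> b \<Longrightarrow> triangle a \<le> triangle b"
  by (induction b) (auto simp: le_Suc_eq)

lemma le_triangle: "n \<le> triangle n"
  by (induction n) auto

lemma sum_lt_ind: "s \<le> z \<Longrightarrow> (\<Sum>t<z. if t < s then 1 else 0::nat) = s"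
proof (induction z)
  case 0 then show ?case by simp
next
  case (Suc z)
  show ?case
  proof (cases "s \<le> z")
    case True then show ?thesis using Suc by simp
  next
    case False
    then have s: "s = Suc z" using Suc.prems by simp
    have "(\<Sum>t<Suc z. if t < s then 1 else 0::nat) = (\<Sum>t<Suc z. 1)"
      using s by (intro sum.cong) auto
    then show ?thesis using s by simp
  qed
qed

definition pfst :: "nat \<Rightarrow> nat" where "pfst z = z - triangle (Sroot z)"
definition psnd :: "nat \<Rightarrow> nat" where "psnd z = Sroot z - pfst z"

lemma pd_eq: "prod_decode z = (pfst z, psnd z)"
proof -
  obtain m k where mk: "prod_decode z = (m, k)" by (cases "prod_decode z")
  have z: "z = triangle (m + k) + m"
    using prod_decode_inverse[of z] mk by (simp add: prod_encode_def)
  define s where "s = m + k"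
  have sz: "s \<le> z" using le_triangle[of s] z s_def by simp
  have iff: "triangle (Suc t) \<le> z \<longleftrightarrow> t < s" for t
  proof
    assume a: "triangle (Suc t) \<le> z"
    show "t < s"
    proof (rule ccontr)
      assume "\<not> t < s"
      then have "triangle (Suc s) \<le> triangle (Suc t)" by (intro triangle_mono) simp
      then show False using a z s_def by simp
    qed
  next
    assume "t < s"
    then have "triangle (Suc t) \<le> triangle s" by (intro triangle_mono) simp
    then show "triangle (Suc t) \<le> z" using z s_def by simp
  qed
  have "Sroot z = s" unfolding Sroot_def iff using sum_lt_ind[OF sz] .
  then have "pfst z = m" "psnd z = k" unfolding pfst_def psnd_def using z s_def by auto
  then show ?thesis using mk by simp
qed

lemma rcomp_pfst: "rcomp n F \<Longrightarrow> rcomp n (\<lambda>xs. pfst (F xs))"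
  unfolding pfst_def by (intro rcomp_sub rcomp_tri rcomp_Sroot)

lemma rcomp_psnd: "rcomp n F \<Longrightarrow> rcomp n (\<lambda>xs. psnd (F xs))"
  unfolding psnd_def by (intro rcomp_sub rcomp_Sroot rcomp_pfst)

definition ctl :: "nat \<Rightarrow> nat" where "ctl c = psnd (c - 1)"
definition chd :: "nat \<Rightarrow> nat" where "chd c = pfst (c - 1)"
definition ctlk :: "nat \<Rightarrow> nat \<Rightarrow> nat" where "ctlk k c = (ctl ^^ k) c"
definition cnth :: "nat \<Rightarrow> nat \<Rightarrow> nat" where "cnth c k = chd (ctlk k c)"

lemma rcomp_ctl: "rcomp n F \<Longrightarrow> rcomp n (\<lambda>xs. ctl (F xs))"
  unfolding ctl_def by (intro rcomp_psnd rcomp_sub rcomp_const)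

lemma rcomp_chd: "rcomp n F \<Longrightarrow> rcomp n (\<lambda>xs. chd (F xs))"
  unfolding chd_def by (intro rcomp_pfst rcomp_sub rcomp_const)

lemma rcomp_ctlk: "rcomp n K \<Longrightarrow> rcomp n C \<Longrightarrow> rcomp n (\<lambda>xs. ctlk (K xs) (C xs))"
proof -
  assume K: "rcomp n K" and C: "rcomp n C"
  have H: "rcomp 1 (\<lambda>ys. ctl (ys ! 0))" by (intro rcomp_ctl rcomp_proj) simp
  have "(\<lambda>x. (\<lambda>ys. ctl (ys ! 0)) [x]) = ctl" by auto
  then show ?thesis using rcomp_iter[OF H K C] unfolding ctlk_def by simp
qed

lemma rcomp_cnth: "rcomp n C \<Longrightarrow> rcomp n K \<Longrightarrow> rcomp n (\<lambda>xs. cnth (C xs) (K xs))"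
  unfolding cnth_def by (intro rcomp_chd rcomp_ctlk)

lemma ld_ctl: "list_decode (ctl c) = tl (list_decode c)"
proof (cases c)
  case 0
  have "prod_decode 0 = (0, 0)" using prod_encode_inverse[of "(0, 0)"] by (simp add: prod_encode_def)
  then have "ctl 0 = 0" unfolding ctl_def using pd_eq[of 0] by simp
  then show ?thesis using 0 by simp
next
  case (Suc k)
  then show ?thesis unfolding ctl_def using pd_eq[of k] by simp
qed

lemma chd_ld: "c \<noteq> 0 \<Longrightarrow> chd c = hd (list_decode c)"
proof -
  assume "c \<noteq> 0"
  then obtain k where "c = Suc k" by (cases c) auto
  then show ?thesis unfolding chd_def using pd_eq[of k] by simp
qed

lemma ld_ctlk: "list_decode (ctlk k c) = drop k (list_decode c)"
  unfolding ctlk_def by (induction k) (auto simp: ld_ctl drop_Suc tl_drop)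

lemma ctlk_zero_iff: "ctlk k c = 0 \<longleftrightarrow> length (list_decode c) \<le> k"
proof -
  have "ctlk k c = 0 \<longleftrightarrow> list_decode (ctlk k c) = []"
    by (metis list_decode.simps(1) list_decode_inverse list_encode.simps(1))
  then show ?thesis by (simp add: ld_ctlk)
qed

lemma cnth_ld: "k < length (list_decode c) \<Longrightarrow> cnth c k = list_decode c ! k"
proof -
  assume k: "k < length (list_decode c)"
  then have "ctlk k c \<noteq> 0" using ctlk_zero_iff by simp
  then have "cnth c k = hd (list_decode (ctlk k c))" unfolding cnth_def by (rule chd_ld)
  then show ?thesis using k by (simp add: ld_ctlk hd_drop_conv_nth)
qed

lemma length_le_encode: "length xs \<le> list_encode xs"
proof (induction xs)
  case Nil then show ?case by simp
next
  case (Cons x xs)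
  have "list_encode xs \<le> prod_encode (x, list_encode xs)" by (rule le_prod_encode_2)
  then show ?case using Cons by simp
qed

lemma length_ld_le: "length (list_decode c) \<le> c"
  using length_le_encode[of "list_decode c"] by simp


lemma cpred_imp: "cpred n P \<Longrightarrow> cpred n Q \<Longrightarrow> cpred n (\<lambda>xs. P xs \<longrightarrow> Q xs)"
proof -
  assume "cpred n P" "cpred n Q"
  then have "cpred n (\<lambda>xs. \<not> P xs \<or> Q xs)" by (intro cpred_or cpred_not)
  then show ?thesis by simp
qed

lemma cpred_neq: "rcomp n F \<Longrightarrow> rcomp n G \<Longrightarrow> cpred n (\<lambda>xs. F xs \<noteq> G xs)"
  by (intro cpred_not cpred_eq)

definition inL :: "nat \<Rightarrow> nat \<Rightarrow> bool" where
  "inL v L \<longleftrightarrow> (\<exists>k<L. ctlk k L \<noteq> 0 \<and> cnth L k = v)"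

lemma inL_iff: "inL v L \<longleftrightarrow> v \<in> set (list_decode L)"
proof
  assume "inL v L"
  then obtain k where k: "ctlk k L \<noteq> 0" "cnth L k = v" unfolding inL_def by blast
  then have kl: "k < length (list_decode L)" using ctlk_zero_iff by simp
  then show "v \<in> set (list_decode L)" using k cnth_ld by auto
next
  assume "v \<in> set (list_decode L)"
  then obtain k where k: "k < length (list_decode L)" "list_decode L ! k = v" by (auto simp: in_set_conv_nth)
  then have "k < L" using length_ld_le[of L] by simp
  moreover have "ctlk k L \<noteq> 0" using k ctlk_zero_iff by simp
  ultimately show "inL v L" unfolding inL_def using k cnth_ld by auto
qed

lemma cpred_inL:
  assumes V: "rcomp n V" and L: "rcomp n L"
  shows "cpred n (\<lambda>xs. inL (V xs) (L xs))"
proof -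
  have "cpred (Suc n) (\<lambda>ys. ctlk (hd ys) (L (tl ys)) \<noteq> 0 \<and> cnth (L (tl ys)) (hd ys) = V (tl ys))"
    by (intro cpred_and cpred_neq cpred_eq rcomp_ctlk rcomp_cnth rcomp_hd rcomp_shift V L rcomp_zero)
  from cpred_bex[OF this L] show ?thesis unfolding inL_def by simp
qed

definition shpC :: "nat \<Rightarrow> bool" where
  "shpC e \<longleftrightarrow> e \<noteq> 0 \<and> ctlk (Suc (chd e)) e = 0 \<and> ctlk (chd e) e \<noteq> 0"

lemma ld_zero_iff: "list_decode e = [] \<longleftrightarrow> e = 0"
  by (metis list_decode.simps(1) list_decode_inverse list_encode.simps(1))

lemma shpC_iff: "shpC e \<longleftrightarrow> shp (list_decode e)"
proof (cases "e = 0")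
  case True then show ?thesis by (simp add: shpC_def shp_def)
next
  case False
  then have ne: "list_decode e \<noteq> []" using ld_zero_iff by simp
  have h: "chd e = hd (list_decode e)" using chd_ld False by simp
  show ?thesis unfolding shpC_def shp_def using False ne h ctlk_zero_iff by auto
qed

lemma cpred_shpC: "rcomp n E \<Longrightarrow> cpred n (\<lambda>xs. shpC (E xs))"
  unfolding shpC_def by (intro cpred_and cpred_neq cpred_eq rcomp_ctlk rcomp_chd rcomp_Suc rcomp_zero)

definition domC :: "nat \<Rightarrow> nat \<Rightarrow> bool" where
  "domC e L \<longleftrightarrow> (\<forall>k<e. ctlk k e \<noteq> 0 \<longrightarrow> inL (4 * prod_encode (cnth e k, cnth e k)) L)"

lemma domC_iff: "domC e L \<longleftrightarrow> (\<forall>a\<in>set (list_decode e). 4 * prod_encode (a, a) \<in> set (list_decode L))"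
proof
  assume d: "domC e L"
  show "\<forall>a\<in>set (list_decode e). 4 * prod_encode (a, a) \<in> set (list_decode L)"
  proof
    fix a assume "a \<in> set (list_decode e)"
    then obtain k where k: "k < length (list_decode e)" "list_decode e ! k = a" by (auto simp: in_set_conv_nth)
    then have "k < e" using length_ld_le[of e] by simp
    moreover have "ctlk k e \<noteq> 0" using k ctlk_zero_iff by simp
    ultimately have "inL (4 * prod_encode (cnth e k, cnth e k)) L" using d unfolding domC_def by blast
    then show "4 * prod_encode (a, a) \<in> set (list_decode L)" using k cnth_ld inL_iff by simp
  qed
next
  assume a: "\<forall>a\<in>set (list_decode e). 4 * prod_encode (a, a) \<in> set (list_decode L)"
  show "domC e L" unfolding domC_def
  proof (intro allI impI)
    fix k assume "k < e" "ctlk k e \<noteq> 0"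
    then have k: "k < length (list_decode e)" using ctlk_zero_iff by simp
    then show "inL (4 * prod_encode (cnth e k, cnth e k)) L" using a cnth_ld inL_iff nth_mem by simp
  qed
qed

lemma cpred_domC:
  assumes E: "rcomp n E" and L: "rcomp n L"
  shows "cpred n (\<lambda>xs. domC (E xs) (L xs))"
proof -
  have "cpred (Suc n) (\<lambda>ys. ctlk (hd ys) (E (tl ys)) \<noteq> 0 \<longrightarrow>
      inL (4 * prod_encode (cnth (E (tl ys)) (hd ys), cnth (E (tl ys)) (hd ys))) (L (tl ys)))"
    by (intro cpred_imp cpred_neq cpred_inL rcomp_ctlk rcomp_mult rcomp_pe rcomp_cnth rcomp_const
        rcomp_hd rcomp_shift E L rcomp_zero)
  from cpred_ball[OF this E] show ?thesis unfolding domC_def by simp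
qed

definition tkeq :: "nat \<Rightarrow> nat \<Rightarrow> nat \<Rightarrow> bool" where
  "tkeq e e' i \<longleftrightarrow> (\<forall>j<i. cnth e j = cnth e' j)"

lemma tkeq_iff:
  assumes "i \<le> length (list_decode e)" "i \<le> length (list_decode e')"
  shows "tkeq e e' i \<longleftrightarrow> take i (list_decode e) = take i (list_decode e')"
proof -
  have "tkeq e e' i \<longleftrightarrow> (\<forall>j<i. list_decode e ! j = list_decode e' ! j)"
    unfolding tkeq_def using assms cnth_ld by auto
  also have "\<dots> \<longleftrightarrow> take i (list_decode e) = take i (list_decode e')"
    using assms by (auto simp: list_eq_iff_nth_eq)
  finally show ?thesis .
qed

lemma cpred_tkeq:
  assumes E: "rcomp n E" and E': "rcomp n E'" and I: "rcomp n I"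
  shows "cpred n (\<lambda>xs. tkeq (E xs) (E' xs) (I xs))"
proof -
  have "cpred (Suc n) (\<lambda>ys. cnth (E (tl ys)) (hd ys) = cnth (E' (tl ys)) (hd ys))"
    by (intro cpred_eq rcomp_cnth rcomp_hd rcomp_shift E E')
  from cpred_ball[OF this I] show ?thesis unfolding tkeq_def by simp
qed

definition lessC :: "nat \<Rightarrow> nat \<Rightarrow> nat \<Rightarrow> bool" where
  "lessC e e' L \<longleftrightarrow> (\<exists>i<e. ctlk i e \<noteq> 0 \<and> ctlk i e' \<noteq> 0 \<and> tkeq e e' i \<and>
      inL (4 * prod_encode (cnth e i, cnth e' i) + 2) L)"

definition nlessC :: "nat \<Rightarrow> nat \<Rightarrow> nat \<Rightarrow> bool" where
  "nlessC e e' L \<longleftrightarrow> e = e' \<or> (\<exists>i<e. ctlk i e \<noteq> 0 \<and> ctlk i e' \<noteq> 0 \<and> tkeq e e' i \<and>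
      cnth e i \<noteq> cnth e' i \<and> inL (4 * prod_encode (cnth e i, cnth e' i) + 3) L)"

lemma cpred_lessC:
  assumes E: "rcomp n E" and E': "rcomp n E'" and L: "rcomp n L"
  shows "cpred n (\<lambda>xs. lessC (E xs) (E' xs) (L xs))"
proof -
  have "cpred (Suc n) (\<lambda>ys. ctlk (hd ys) (E (tl ys)) \<noteq> 0 \<and> ctlk (hd ys) (E' (tl ys)) \<noteq> 0 \<and>
      tkeq (E (tl ys)) (E' (tl ys)) (hd ys) \<and>
      inL (4 * prod_encode (cnth (E (tl ys)) (hd ys), cnth (E' (tl ys)) (hd ys)) + 2) (L (tl ys)))"
    by (intro cpred_and cpred_neq cpred_tkeq cpred_inL rcomp_ctlk rcomp_add rcomp_mult rcomp_pe
        rcomp_cnth rcomp_const rcomp_hd rcomp_shift E E' L rcomp_zero)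
  from cpred_bex[OF this E] show ?thesis unfolding lessC_def by simp
qed

lemma cpred_nlessC:
  assumes E: "rcomp n E" and E': "rcomp n E'" and L: "rcomp n L"
  shows "cpred n (\<lambda>xs. nlessC (E xs) (E' xs) (L xs))"
proof -
  have "cpred (Suc n) (\<lambda>ys. ctlk (hd ys) (E (tl ys)) \<noteq> 0 \<and> ctlk (hd ys) (E' (tl ys)) \<noteq> 0 \<and>
      tkeq (E (tl ys)) (E' (tl ys)) (hd ys) \<and>
      cnth (E (tl ys)) (hd ys) \<noteq> cnth (E' (tl ys)) (hd ys) \<and>
      inL (4 * prod_encode (cnth (E (tl ys)) (hd ys), cnth (E' (tl ys)) (hd ys)) + 3) (L (tl ys)))"
    by (intro cpred_and cpred_neq cpred_tkeq cpred_inL rcomp_ctlk rcomp_add rcomp_mult rcomp_pe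
        rcomp_cnth rcomp_const rcomp_hd rcomp_shift E E' L rcomp_zero)
  from cpred_bex[OF this E] have "cpred n (\<lambda>xs. \<exists>i<E xs. ctlk i (E xs) \<noteq> 0 \<and> ctlk i (E' xs) \<noteq> 0 \<and>
      tkeq (E xs) (E' xs) i \<and> cnth (E xs) i \<noteq> cnth (E' xs) i \<and>
      inL (4 * prod_encode (cnth (E xs) i, cnth (E' xs) i) + 3) (L xs))" by simp
  then have "cpred n (\<lambda>xs. E xs = E' xs \<or> (\<exists>i<E xs. ctlk i (E xs) \<noteq> 0 \<and> ctlk i (E' xs) \<noteq> 0 \<and>
      tkeq (E xs) (E' xs) i \<and> cnth (E xs) i \<noteq> cnth (E' xs) i \<and>
      inL (4 * prod_encode (cnth (E xs) i, cnth (E' xs) i) + 3) (L xs)))"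
    by (intro cpred_or cpred_eq E E')
  then show ?thesis unfolding nlessC_def by simp
qed

lemma div4_eq: "(\<Sum>t<c. if 4 * Suc t \<le> c then 1 else 0::nat) = c div 4"
proof -
  have "(\<Sum>t<c. if 4 * Suc t \<le> c then 1 else 0::nat) = (\<Sum>t<c. if t < c div 4 then 1 else 0)"
  proof (intro sum.cong refl)
    fix t assume "t \<in> {..<c}"
    have "4 * Suc t \<le> c \<longleftrightarrow> Suc t \<le> c div 4"
      using less_eq_div_iff_mult_less_eq[of 4 "Suc t" c] by (simp add: mult.commute)
    then show "(if 4 * Suc t \<le> c then 1 else 0::nat) = (if t < c div 4 then 1 else 0)"
      by (simp add: Suc_le_eq)
  qed
  also have "\<dots> = c div 4" by (rule sum_lt_ind) simp
  finally show ?thesis .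
qed

lemma rcomp_div4: "rcomp n F \<Longrightarrow> rcomp n (\<lambda>xs. F xs div 4)"
proof -
  assume F: "rcomp n F"
  have "cpred (Suc n) (\<lambda>ys. 4 * Suc (hd ys) \<le> F (tl ys))"
    by (intro cpred_le rcomp_mult rcomp_const rcomp_Suc rcomp_hd rcomp_shift F)
  then have "rcomp n (\<lambda>xs. \<Sum>t<F xs. (\<lambda>ys. if 4 * Suc (hd ys) \<le> F (tl ys) then 1 else 0) (t # xs))"
    unfolding cpred_def by (rule rcomp_bsum[OF _ F])
  then show ?thesis using div4_eq by simp
qed

lemma rcomp_mod4: "rcomp n F \<Longrightarrow> rcomp n (\<lambda>xs. F xs mod 4)"
proof -
  assume F: "rcomp n F"
  have "rcomp n (\<lambda>xs. F xs - 4 * (F xs div 4))" by (intro rcomp_sub rcomp_mult rcomp_const rcomp_div4 F)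
  then show ?thesis by (simp add: minus_div_mult_eq_mod[symmetric] mult.commute)
qed



definition dec_lit :: "nat \<Rightarrow> lit" where
  "dec_lit c = (if c mod 4 = 0 then Pos (AEq (pfst (c div 4)) (psnd (c div 4)))
     else if c mod 4 = 1 then Neg (AEq (pfst (c div 4)) (psnd (c div 4)))
     else if c mod 4 = 2 then Pos (ALess (pfst (c div 4)) (psnd (c div 4)))
     else Neg (ALess (pfst (c div 4)) (psnd (c div 4))))"

lemma enc_lit_codes:
  "enc_lit (Pos (AEq e e')) = 4 * prod_encode (e, e')"
  "enc_lit (Neg (AEq e e')) = 4 * prod_encode (e, e') + 1"
  "enc_lit (Pos (ALess e e')) = 4 * prod_encode (e, e') + 2"
  "enc_lit (Neg (ALess e e')) = 4 * prod_encode (e, e') + 3"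
  by simp_all

lemma pfst_psnd_pe: "pfst (prod_encode (e, e')) = e" "psnd (prod_encode (e, e')) = e'"
  using pd_eq[of "prod_encode (e, e')"] by (simp_all add: prod_encode_inverse)

lemma dm4: "(4 * p) div 4 = (p::nat)" "(4 * p) mod 4 = (0::nat)"
  "Suc (4 * p) div 4 = p" "Suc (4 * p) mod 4 = 1"
  "Suc (Suc (4 * p)) div 4 = p" "Suc (Suc (4 * p)) mod 4 = 2"
  "Suc (Suc (Suc (4 * p))) div 4 = p" "Suc (Suc (Suc (4 * p))) mod 4 = 3"
  by presburger+

lemma dec_enc: "dec_lit (enc_lit \<phi>) = \<phi>"
  by (cases \<phi> rule: lit_cases) (simp_all add: dec_lit_def pfst_psnd_pe dm4)

lemma enc_dec: "enc_lit (dec_lit c) = c"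
proof -
  have pe: "prod_encode (pfst w, psnd w) = w" for w using pd_eq[of w] prod_decode_inverse[of w] by simp
  have c: "4 * (c div 4) + c mod 4 = c" by simp
  have "c mod 4 < 4" by simp
  then consider "c mod 4 = 0" | "c mod 4 = 1" | "c mod 4 = 2" | "c mod 4 = 3" by arith
  then show ?thesis
  proof cases
    case 1 then have "enc_lit (dec_lit c) = 4 * (c div 4) + c mod 4" by (simp add: dec_lit_def pe)
    then show ?thesis using c by simp
  next
    case 2 then have "enc_lit (dec_lit c) = 4 * (c div 4) + c mod 4" by (simp add: dec_lit_def pe)
    then show ?thesis using c by simp
  next
    case 3 then have "enc_lit (dec_lit c) = 4 * (c div 4) + c mod 4" by (simp add: dec_lit_def pe)
    then show ?thesis using c by simp
  next
    case 4 then have "enc_lit (dec_lit c) = 4 * (c div 4) + c mod 4" by (simp add: dec_lit_def pe)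
    then show ?thesis using c by simp
  qed
qed

lemma mem_dec_image: "\<psi> \<in> dec_lit ` S \<longleftrightarrow> enc_lit \<psi> \<in> S"
  by (metis dec_enc enc_dec image_iff)

lemma mem_enc_pair: "x \<in> enc_pair ` Gam \<longleftrightarrow> okl (dec_lit (psnd x)) (dec_lit ` set (list_decode (pfst x)))"
proof
  assume "x \<in> enc_pair ` Gam"
  then obtain \<alpha> \<phi> where x: "x = enc_pair (\<alpha>, \<phi>)" and ok: "okl \<phi> (set \<alpha>)"
    by (auto simp: Gam_def)
  have px: "pfst x = list_encode (map enc_lit \<alpha>)" "psnd x = enc_lit \<phi>"
    using x pd_eq[of x] by (auto simp: enc_pair_def prod_encode_inverse)
  have "dec_lit ` set (list_decode (pfst x)) = set \<alpha>" using px by (simp add: image_image dec_enc)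
  then show "okl (dec_lit (psnd x)) (dec_lit ` set (list_decode (pfst x)))" using ok px by (simp add: dec_enc)
next
  assume ok: "okl (dec_lit (psnd x)) (dec_lit ` set (list_decode (pfst x)))"
  let ?\<alpha> = "map dec_lit (list_decode (pfst x))"
  have "enc_pair (?\<alpha>, dec_lit (psnd x)) = prod_encode (pfst x, psnd x)"
    by (simp add: enc_pair_def map_idI enc_dec comp_def)
  also have "\<dots> = x" using pd_eq[of x] prod_decode_inverse[of x] by simp
  finally have "enc_pair (?\<alpha>, dec_lit (psnd x)) = x" .
  moreover have "(?\<alpha>, dec_lit (psnd x)) \<in> Gam" using ok by (simp add: Gam_def)
  ultimately show "x \<in> enc_pair ` Gam" by (metis image_eqI)
qed

definition okc :: "nat \<Rightarrow> nat \<Rightarrow> bool" where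
  "okc L c \<longleftrightarrow>
    (c mod 4 = 0 \<and> pfst (c div 4) = psnd (c div 4) \<and> shpC (pfst (c div 4)) \<and> domC (pfst (c div 4)) L) \<or>
    (c mod 4 = 1 \<and> pfst (c div 4) \<noteq> psnd (c div 4) \<and> shpC (pfst (c div 4)) \<and> shpC (psnd (c div 4)) \<and>
       domC (pfst (c div 4)) L \<and> domC (psnd (c div 4)) L) \<or>
    (c mod 4 = 2 \<and> shpC (pfst (c div 4)) \<and> shpC (psnd (c div 4)) \<and>
       domC (pfst (c div 4)) L \<and> domC (psnd (c div 4)) L \<and> lessC (pfst (c div 4)) (psnd (c div 4)) L) \<or>
    (c mod 4 = 3 \<and> shpC (pfst (c div 4)) \<and> shpC (psnd (c div 4)) \<and>
       domC (pfst (c div 4)) L \<and> domC (psnd (c div 4)) L \<and> nlessC (pfst (c div 4)) (psnd (c div 4)) L)"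

lemma domlits_X: "domlits (list_decode e) \<subseteq> dec_lit ` set (list_decode L) \<longleftrightarrow> domC e L"
proof -
  have "domlits (list_decode e) \<subseteq> dec_lit ` set (list_decode L) \<longleftrightarrow>
     (\<forall>a\<in>set (list_decode e). Pos (AEq a a) \<in> dec_lit ` set (list_decode L))"
    unfolding domlits_def by blast
  also have "\<dots> \<longleftrightarrow> (\<forall>a\<in>set (list_decode e). 4 * prod_encode (a, a) \<in> set (list_decode L))"
    by (simp only: mem_dec_image enc_lit_codes)
  finally show ?thesis by (simp add: domC_iff)
qed

lemma lessC_iff: "lessC e e' L \<longleftrightarrow> (\<exists>i. i < length (list_decode e) \<and> i < length (list_decode e') \<and>
    take i (list_decode e) = take i (list_decode e') \<and>
    Pos (ALess (list_decode e ! i) (list_decode e' ! i)) \<in> dec_lit ` set (list_decode L))"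
  unfolding lessC_def mem_dec_image enc_lit_codes
proof
  assume "\<exists>i<e. ctlk i e \<noteq> 0 \<and> ctlk i e' \<noteq> 0 \<and> tkeq e e' i \<and> inL (4 * prod_encode (cnth e i, cnth e' i) + 2) L"
  then obtain i where i: "ctlk i e \<noteq> 0" "ctlk i e' \<noteq> 0" "tkeq e e' i" "inL (4 * prod_encode (cnth e i, cnth e' i) + 2) L"
    by blast
  have l: "i < length (list_decode e)" "i < length (list_decode e')" using i ctlk_zero_iff by auto
  then show "\<exists>i. i < length (list_decode e) \<and> i < length (list_decode e') \<and>
    take i (list_decode e) = take i (list_decode e') \<and>
    4 * prod_encode (list_decode e ! i, list_decode e' ! i) + 2 \<in> set (list_decode L)"
    using i tkeq_iff[of i e e'] cnth_ld inL_iff by (intro exI[of _ i]) auto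
next
  assume "\<exists>i. i < length (list_decode e) \<and> i < length (list_decode e') \<and>
    take i (list_decode e) = take i (list_decode e') \<and>
    4 * prod_encode (list_decode e ! i, list_decode e' ! i) + 2 \<in> set (list_decode L)"
  then obtain i where i: "i < length (list_decode e)" "i < length (list_decode e')"
    "take i (list_decode e) = take i (list_decode e')"
    "4 * prod_encode (list_decode e ! i, list_decode e' ! i) + 2 \<in> set (list_decode L)" by blast
  have "i < e" using i(1) length_ld_le[of e] by simp
  then show "\<exists>i<e. ctlk i e \<noteq> 0 \<and> ctlk i e' \<noteq> 0 \<and> tkeq e e' i \<and> inL (4 * prod_encode (cnth e i, cnth e' i) + 2) L"
    using i tkeq_iff[of i e e'] cnth_ld inL_iff ctlk_zero_iff by (intro exI[of _ i]) auto
qed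

lemma nlessC_iff: "nlessC e e' L \<longleftrightarrow> e = e' \<or> (\<exists>i. i < length (list_decode e) \<and> i < length (list_decode e') \<and>
    take i (list_decode e) = take i (list_decode e') \<and> list_decode e ! i \<noteq> list_decode e' ! i \<and>
    Neg (ALess (list_decode e ! i) (list_decode e' ! i)) \<in> dec_lit ` set (list_decode L))"
  unfolding nlessC_def mem_dec_image enc_lit_codes
proof (intro disj_cong refl iffI)
  assume "\<exists>i<e. ctlk i e \<noteq> 0 \<and> ctlk i e' \<noteq> 0 \<and> tkeq e e' i \<and> cnth e i \<noteq> cnth e' i \<and> inL (4 * prod_encode (cnth e i, cnth e' i) + 3) L"
  then obtain i where i: "ctlk i e \<noteq> 0" "ctlk i e' \<noteq> 0" "tkeq e e' i" "cnth e i \<noteq> cnth e' i"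
    "inL (4 * prod_encode (cnth e i, cnth e' i) + 3) L"
    by blast
  have l: "i < length (list_decode e)" "i < length (list_decode e')" using i ctlk_zero_iff by auto
  then show "\<exists>i. i < length (list_decode e) \<and> i < length (list_decode e') \<and>
    take i (list_decode e) = take i (list_decode e') \<and> list_decode e ! i \<noteq> list_decode e' ! i \<and>
    4 * prod_encode (list_decode e ! i, list_decode e' ! i) + 3 \<in> set (list_decode L)"
    using i tkeq_iff[of i e e'] cnth_ld inL_iff by (intro exI[of _ i]) auto
next
  assume "\<exists>i. i < length (list_decode e) \<and> i < length (list_decode e') \<and>
    take i (list_decode e) = take i (list_decode e') \<and> list_decode e ! i \<noteq> list_decode e' ! i \<and>
    4 * prod_encode (list_decode e ! i, list_decode e' ! i) + 3 \<in> set (list_decode L)"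
  then obtain i where i: "i < length (list_decode e)" "i < length (list_decode e')"
    "take i (list_decode e) = take i (list_decode e')" "list_decode e ! i \<noteq> list_decode e' ! i"
    "4 * prod_encode (list_decode e ! i, list_decode e' ! i) + 3 \<in> set (list_decode L)" by blast
  have "i < e" using i(1) length_ld_le[of e] by simp
  then show "\<exists>i<e. ctlk i e \<noteq> 0 \<and> ctlk i e' \<noteq> 0 \<and> tkeq e e' i \<and> cnth e i \<noteq> cnth e' i \<and> inL (4 * prod_encode (cnth e i, cnth e' i) + 3) L"
    using i tkeq_iff[of i e e'] cnth_ld inL_iff ctlk_zero_iff by (intro exI[of _ i]) auto
qed

lemma okc_iff: "okc L c \<longleftrightarrow> okl (dec_lit c) (dec_lit ` set (list_decode L))"
proof -
  have "c mod 4 < 4" by simp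
  then consider "c mod 4 = 0" | "c mod 4 = 1" | "c mod 4 = 2" | "c mod 4 = 3" by arith
  then show ?thesis
  proof cases
    case 1
    then have d: "dec_lit c = Pos (AEq (pfst (c div 4)) (psnd (c div 4)))" by (simp add: dec_lit_def)
    show ?thesis using 1 by (simp add: okc_def d domlits_X shpC_iff)
  next
    case 2
    then have d: "dec_lit c = Neg (AEq (pfst (c div 4)) (psnd (c div 4)))" by (simp add: dec_lit_def)
    show ?thesis using 2 by (simp add: okc_def d domlits_X shpC_iff)
  next
    case 3
    then have d: "dec_lit c = Pos (ALess (pfst (c div 4)) (psnd (c div 4)))" by (simp add: dec_lit_def)
    show ?thesis using 3 by (simp add: okc_def d domlits_X shpC_iff lessC_iff)
  next
    case 4
    then have d: "dec_lit c = Neg (ALess (pfst (c div 4)) (psnd (c div 4)))" by (simp add: dec_lit_def)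
    show ?thesis using 4 by (simp add: okc_def d domlits_X shpC_iff nlessC_iff)
  qed
qed

lemma cpred_okc: "cpred 1 (\<lambda>xs. okc (pfst (xs ! 0)) (psnd (xs ! 0)))"
  unfolding okc_def
  by (intro cpred_or cpred_and cpred_eq cpred_neq cpred_shpC cpred_domC cpred_lessC cpred_nlessC
      rcomp_pfst rcomp_psnd rcomp_div4 rcomp_mod4 rcomp_const rcomp_proj) simp_all

theorem enum_op_Gam: "enum_op Gam"
proof -
  let ?Q = "\<lambda>xs. okc (pfst (xs ! 0)) (psnd (xs ! 0))"
  have "cpred (Suc 1) (\<lambda>ys. ?Q (tl ys))" by (rule cpred_shift[OF cpred_okc])
  then have "rcomp (Suc 1) (\<lambda>ys. if ?Q (tl ys) then 0 else 1)"
    by (intro rcomp_if rcomp_const)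
  then obtain g where g: "\<forall>ys. length ys = Suc 1 \<longrightarrow> eval g ys (if ?Q (tl ys) then 0 else 1)"
    unfolding rcomp_def by blast
  have "\<forall>x. x \<in> enc_pair ` Gam \<longleftrightarrow> (\<exists>y. eval (Mu g) [x] y)"
  proof (intro allI iffI)
    fix x assume "x \<in> enc_pair ` Gam"
    then have q: "?Q [x]" using mem_enc_pair okc_iff by simp
    have "length [0, x] = Suc 1" by simp
    then have "eval g [0, x] (if ?Q (tl [0, x]) then 0 else 1)" using g by blast
    then have "eval g [0, x] 0" using q by simp
    then have "eval (Mu g) [x] 0" by (intro ev_Mu) auto
    then show "\<exists>y. eval (Mu g) [x] y" by blast
  next
    fix x assume "\<exists>y. eval (Mu g) [x] y"
    then obtain y where "eval (Mu g) [x] y" by blast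
    then have e0: "eval g [y, x] 0" by (cases rule: eval.cases) auto
    have "length [y, x] = Suc 1" by simp
    then have "eval g [y, x] (if ?Q (tl [y, x]) then 0 else 1)" using g by blast
    then have "eval g [y, x] (if ?Q [x] then 0 else 1)" by simp
    then have "(if ?Q [x] then 0 else 1) = (0::nat)" using eval_det[OF e0] by simp
    then have "?Q [x]" by (simp split: if_splits)
    then show "x \<in> enc_pair ` Gam" using mem_enc_pair okc_iff by simp
  qed
  then show ?thesis unfolding enum_op_def ce_def by blast
qed



lemma diag_inj:
  assumes "is_struc B" "is_struc C" "diag B = diag C"
  shows "B = C"
proof -
  have f: "fst B = fst C"
    using diag_simps(1)[OF assms(1)] diag_simps(1)[OF assms(2)] assms(3) by blast
  have s: "snd B = snd C"
  proof (intro set_eqI)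
    fix p :: "nat \<times> nat"
    obtain a b where p: "p = (a, b)" by (cases p)
    have "p \<in> snd B \<longleftrightarrow> Pos (ALess a b) \<in> diag B"
      using diag_simps(3)[OF assms(1)] assms(1) p unfolding is_struc_def by auto
    moreover have "p \<in> snd C \<longleftrightarrow> Pos (ALess a b) \<in> diag C"
      using diag_simps(3)[OF assms(2)] assms(2) p unfolding is_struc_def by auto
    ultimately show "p \<in> snd B \<longleftrightarrow> p \<in> snd C" using assms(3) by simp
  qed
  show ?thesis using f s by (simp add: prod_eq_iff)
qed

lemma alpha_eq: "omega_pow_nat (n + 1) = (opD (IA n), opR (IA n) ltN)"
  by (simp add: omega_pow_nat_def omega_pow_eq)

lemma is_struc_rev: "is_struc A \<Longrightarrow> is_struc (rev_order A)"
  unfolding is_struc_def rev_order_def by auto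

lemma Phi_rev: "Phi (rev_order A) = rev_order (Phi A)"
  unfolding Phi_def rev_order_def by (auto simp: lexR_conv)

lemma main_pos:
  assumes st: "is_struc A" and isoA: "iso A (omega_pow_nat (n + 1))"
  shows "slo A \<and> iso (Phi A) (omega_pow_omega_plus n)"
proof -
  have slA: "slo (omega_pow_nat (n + 1))"
    unfolding omega_pow_nat_def by (rule slo_omega_pow[OF slin_nat])
  have sA: "slo A" by (rule iso_slo[OF isoA slA st])
  have wA: "wf (snd A)" by (rule iso_wf[OF isoA _ st]) (simp add: omega_pow_nat_def omega_pow_eq wf_opR_nat)
  from iso_sym[OF isoA] obtain h where h: "bij_betw h (opD (IA n)) (fst A)"
    "\<forall>x\<in>opD (IA n). \<forall>y\<in>opD (IA n). (x, y) \<in> opR (IA n) ltN \<longleftrightarrow> (h x, h y) \<in> snd A"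
    unfolding iso_def alpha_eq by auto
  interpret emb n A h using h sA wA by unfold_locales auto
  have "iso (Phi A) (PhiL A)" by (rule iso_sym[OF iso_PhiL_Phi])
  then have "iso (Phi A) (omega_pow_omega_plus n)" using PhiL_iso by (rule iso_trans)
  then show ?thesis using sA by simp
qed

lemma main_neg:
  assumes st: "is_struc A" and isoA: "iso A (rev_order (omega_pow_nat (n + 1)))"
  shows "slo A \<and> iso (Phi A) (rev_order (omega_pow_omega_plus n))"
proof -
  have "iso (rev_order A) (omega_pow_nat (n + 1))"
    using iso_rev[OF isoA] by (simp add: rev_rev)
  then have m: "slo (rev_order A) \<and> iso (Phi (rev_order A)) (omega_pow_omega_plus n)"
    using main_pos is_struc_rev[OF st] by blast
  then have "slo A" using slo_rev[of "rev_order A"] by (simp add: rev_rev)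
  moreover have "iso (Phi A) (rev_order (omega_pow_omega_plus n))"
    using iso_rev[of "Phi (rev_order A)" "omega_pow_omega_plus n"] m by (simp add: Phi_rev rev_rev)
  ultimately show ?thesis by simp
qed

lemma T_not_rev: "\<not> iso (omega_pow_omega_plus n) (rev_order (omega_pow_omega_plus n))"
  unfolding omega_pow_omega_plus_def
  by (rule omega_pow_not_iso_rev[OF slin_oplus, of "Inl 0"]) simp

theorem corollary6p6:
  fixes n :: nat
  shows "iso_class2 (omega_pow_nat (n + 1)) (rev_order (omega_pow_nat (n + 1)))
     \<le>\<^sub>c iso_class2 (omega_pow_omega_plus n) (rev_order (omega_pow_omega_plus n))"
proof -
  let ?a = "omega_pow_nat (n + 1)"
  let ?T = "omega_pow_omega_plus n"
  let ?K0 = "iso_class2 ?a (rev_order ?a)"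
  let ?K1 = "iso_class2 ?T (rev_order ?T)"
  have K0: "\<And>A. A \<in> ?K0 \<Longrightarrow> is_struc A \<and> slo A \<and>
      (iso A ?a \<longrightarrow> iso (Phi A) ?T) \<and> (\<not> iso A ?a \<longrightarrow> iso (Phi A) (rev_order ?T))"
  proof -
    fix A assume "A \<in> ?K0"
    then have st: "is_struc A" and c: "iso A ?a \<or> iso A (rev_order ?a)" by (auto simp: iso_class2_def)
    show "is_struc A \<and> slo A \<and>
      (iso A ?a \<longrightarrow> iso (Phi A) ?T) \<and> (\<not> iso A ?a \<longrightarrow> iso (Phi A) (rev_order ?T))"
      using main_pos[OF st] main_neg[OF st] c st by blast
  qed
  have ap: "\<And>A. A \<in> ?K0 \<Longrightarrow> apply_op Gam (diag A) = diag (Phi A)"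
    using K0 apply_Gam_diag by blast
  have c2: "\<forall>A\<in>?K0. \<exists>B\<in>?K1. apply_op Gam (diag A) = diag B"
  proof
    fix A assume A: "A \<in> ?K0"
    have "Phi A \<in> ?K1" using K0[OF A] is_struc_Phi by (auto simp: iso_class2_def)
    then show "\<exists>B\<in>?K1. apply_op Gam (diag A) = diag B" using ap[OF A] by blast
  qed
  have c3: "\<forall>A\<in>?K0. \<forall>A'\<in>?K0. \<forall>B B'. is_struc B \<longrightarrow> is_struc B' \<longrightarrow>
        apply_op Gam (diag A) = diag B \<longrightarrow> apply_op Gam (diag A') = diag B' \<longrightarrow>
        (iso A A' \<longleftrightarrow> iso B B')"
  proof (intro ballI allI impI)
    fix A A' B B' assume A: "A \<in> ?K0" and A': "A' \<in> ?K0" and sB: "is_struc B" and sB': "is_struc B'"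
      and e: "apply_op Gam (diag A) = diag B" and e': "apply_op Gam (diag A') = diag B'"
    have BB: "B = Phi A" using diag_inj[OF sB is_struc_Phi] e ap[OF A] by simp
    have BB': "B' = Phi A'" using diag_inj[OF sB' is_struc_Phi] e' ap[OF A'] by simp
    note KA = K0[OF A] and KA' = K0[OF A']
    show "iso A A' \<longleftrightarrow> iso B B'"
    proof (cases "iso A ?a")
      case True
      note t = this
      show ?thesis
      proof (cases "iso A' ?a")
        case True
        have "iso A A'" using t True iso_sym iso_trans by blast
        moreover have "iso B B'" using t True KA KA' BB BB' iso_sym iso_trans by metis
        ultimately show ?thesis by simp
      next
        case False
        have "\<not> iso A A'" using t False iso_sym iso_trans by blast
        moreover have "\<not> iso B B'"
        proof
          assume "iso B B'"
          then have "iso ?T (rev_order ?T)" using t False KA KA' BB BB' iso_sym iso_trans by metis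
          then show False using T_not_rev by blast
        qed
        ultimately show ?thesis by simp
      qed
    next
      case False
      note f = this
      show ?thesis
      proof (cases "iso A' ?a")
        case True
        have "\<not> iso A A'" using f True iso_sym iso_trans by blast
        moreover have "\<not> iso B B'"
        proof
          assume "iso B B'"
          then have "iso ?T (rev_order ?T)" using f True KA KA' BB BB' iso_sym iso_trans by metis
          then show False using T_not_rev by blast
        qed
        ultimately show ?thesis by simp
      next
        case False
        have iA: "iso A (rev_order ?a)" "iso A' (rev_order ?a)"
          using f False A A' by (auto simp: iso_class2_def)
        have "iso A A'" using iA iso_sym iso_trans by blast
        moreover have "iso B B'" using f False KA KA' BB BB' iso_sym iso_trans by metis
        ultimately show ?thesis by simp
      qed
    qed
  qed
  have "comp_embedding Gam ?K0 ?K1"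
    unfolding comp_embedding_def using enum_op_Gam c2 c3 by blast
  then show ?thesis unfolding comp_reducible_def by blast
qed


end
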